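(* Let $\beta\in C^1([0,1]^2)$ be strictly positive, let $d\in C^1(0,1)$ with $0<d_0\le d$ and $\|d\|_{C^1}\le d_1$, let $\varrho\in C^1(0,1)$ with $\varrho\ge 0$, $\|\varrho\|_{C^1}\le r$ and $\varrho\not\equiv 0$, and let $\gamma\equiv 1$. Then for every $S_*>0$ there exists a strictly positive function $v_*\in W^{2,1}(0,1)$ with $v_*'(0)=v_*'(1)=0$ such that $(v_*,S_* )$ is a steady state of the model, i.e. \begin{align*} 0&=(d v_*')'-\varrho v_*+S_*\int_0^1\beta(\cdot,y)v_*(y)^{2}\,\mathrm{d} y,\\ 0&=\int_0^1\varrho(x)v_*(x)\,\mathrm{d} x-S_*\int_0^1\int_0^1\beta(x,y)v_*(y)^{2}\,\mathrm{d} y\,\mathrm{d} x. \end{align*}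
   Context: This concerns steady states of the model $v_t-(d v_x)_x=-\varrho v+S\int_0^1\beta(x,y)v(y,t)^{1+\gamma(y)}\mathrm{d} y$, $S'=\int_0^1\varrho v\,\mathrm{d} x-S\int_0^1\int_0^1\beta(x,y)v(y,t)^{1+\gamma(y)}\mathrm{d} y\,\mathrm{d} x$, with Neumann boundary conditions $v_x(0,t)=v_x(1,t)=0$, in the case $\gamma\equiv1$. *)

theory Defs
  imports "HOL-Analysis.Analysis"
begin

definition unit_square :: "(real \<times> real) set" where
  "unit_square = {0..1} \<times> {0..1}"

text \<open>beta in C^1([0,1]^2): differentiable (one-sided at the boundary) on the closed
  square, with a Frechet derivative that depends continuously on the point.\<close>
definition C1_on_square :: "(real \<Rightarrow> real \<Rightarrow> real) \<Rightarrow> bool" where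
  "C1_on_square \<beta> \<longleftrightarrow>
     (\<exists>D :: real \<times> real \<Rightarrow> ((real \<times> real) \<Rightarrow>\<^sub>L real).
        (\<forall>z\<in>unit_square. ((\<lambda>(x,y). \<beta> x y) has_derivative blinfun_apply (D z)) (at z within unit_square))
        \<and> continuous_on unit_square D)"

text \<open>f in C^1(0,1) with norm sup|f| + sup|f'| bounded by M (sup over the open interval).\<close>
definition C1_open_bounded :: "(real \<Rightarrow> real) \<Rightarrow> real \<Rightarrow> bool" where
  "C1_open_bounded f M \<longleftrightarrow>
     (\<exists>f'. (\<forall>x\<in>{0<..<1}. (f has_real_derivative f' x) (at x))
        \<and> continuous_on {0<..<1} f'
        \<and> (\<forall>x\<in>{0<..<1}. \<forall>y\<in>{0<..<1}. \<bar>f x\<bar> + \<bar>f' y\<bar> \<le> M))"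

end

theory Submission
  imports Defs "HOL-Complex_Analysis.Great_Picard"
begin


definition klab :: "((nat \<Rightarrow> real) \<Rightarrow> nat \<Rightarrow> real) \<Rightarrow> nat \<Rightarrow> (nat \<Rightarrow> nat) \<Rightarrow> nat \<Rightarrow> nat" where
  "klab G p x i = (let y = (\<lambda>j. real (x j) / real p) in
     if x i = 0 then 0 else if x i = p then 1 else if y i \<le> G y i then 0 else 1)"

lemma kuhn_approx:
  fixes G :: "(nat \<Rightarrow> real) \<Rightarrow> nat \<Rightarrow> real" and n :: nat and e \<delta> :: real
  assumes inc: "\<And>y i. (\<forall>j<n. 0 \<le> y j \<and> y j \<le> 1) \<Longrightarrow> i < n \<Longrightarrow> 0 \<le> G y i \<and> G y i \<le> 1"
    and uc: "\<And>y z i. (\<forall>j<n. 0 \<le> y j \<and> y j \<le> 1) \<Longrightarrow> (\<forall>j<n. 0 \<le> z j \<and> z j \<le> 1)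
        \<Longrightarrow> (\<forall>j<n. \<bar>y j - z j\<bar> \<le> \<delta>) \<Longrightarrow> i < n \<Longrightarrow> \<bar>G y i - G z i\<bar> \<le> e"
    and dpos: "\<delta> > 0"
  shows "\<exists>y. (\<forall>j<n. 0 \<le> y j \<and> y j \<le> 1) \<and> (\<forall>i<n. \<bar>G y i - y i\<bar> \<le> e + \<delta>)"
proof -
  obtain p :: nat where p: "1 / \<delta> < real p" using reals_Archimedean2 by blast
  have "0 < 1 / \<delta>" using dpos by simp
  then have "0 < real p" using p by linarith
  then have p0: "0 < p" by simp
  have "1 < real p * \<delta>" using p dpos by (simp add: field_simps)
  then have pd: "1 / real p \<le> \<delta>" using p0 by (simp add: field_simps)
  let ?lab = "klab G p"
  have cube: "\<forall>j<n. 0 \<le> real (x j) / real p \<and> real (x j) / real p \<le> 1" if "\<forall>i<n. x i \<le> p" for x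
    using that p0 by (auto simp: divide_le_eq_1)
  obtain q where q1: "\<forall>i<n. q i < p"
    and q2: "\<forall>i<n. \<exists>r s. (\<forall>j<n. q j \<le> r j \<and> r j \<le> q j + 1) \<and> (\<forall>j<n. q j \<le> s j \<and> s j \<le> q j + 1) \<and> ?lab r i \<noteq> ?lab s i"
  proof (rule kuhn_lemma[OF p0])
    show "\<forall>x. (\<forall>i<n. x i \<le> p) \<longrightarrow> (\<forall>i<n. ?lab x i = 0 \<or> ?lab x i = 1)"
      by (auto simp: klab_def Let_def)
    show "\<forall>x. (\<forall>i<n. x i \<le> p) \<longrightarrow> (\<forall>i<n. x i = 0 \<longrightarrow> ?lab x i = 0)"
      by (auto simp: klab_def Let_def)
    show "\<forall>x. (\<forall>i<n. x i \<le> p) \<longrightarrow> (\<forall>i<n. x i = p \<longrightarrow> ?lab x i = 1)"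
      using p0 by (auto simp: klab_def Let_def)
  qed
  define y where "y = (\<lambda>j. real (q j) / real p)"
  have ycube: "\<forall>j<n. 0 \<le> y j \<and> y j \<le> 1"
    using q1 p0 by (auto simp: y_def divide_le_eq_1)
  have lab0: "y' i \<le> G y' i" if "?lab x i = 0" "\<forall>j<n. x j \<le> p" "i < n" "y' = (\<lambda>j. real (x j) / real p)" for x i y'
  proof -
    have "0 \<le> G y' i" using inc[of y' i] cube[OF that(2)] that by auto
    then show ?thesis using that p0 by (auto simp: klab_def Let_def split: if_splits)
  qed
  have lab1: "G y' i \<le> y' i" if "?lab x i \<noteq> 0" "\<forall>j<n. x j \<le> p" "i < n" "y' = (\<lambda>j. real (x j) / real p)" for x i y'
  proof -
    have "G y' i \<le> 1" using inc[of y' i] cube[OF that(2)] that by auto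
    then show ?thesis using that p0 by (auto simp: klab_def Let_def split: if_splits)
  qed
  have close: "\<forall>j<n. \<bar>real (x j) / real p - y j\<bar> \<le> \<delta>" and ge: "\<forall>j<n. y j \<le> real (x j) / real p"
    and le: "\<forall>j<n. real (x j) / real p \<le> y j + \<delta>"
    if "\<forall>j<n. q j \<le> x j \<and> x j \<le> q j + 1" for x
  proof -
    { fix j assume j: "j < n"
      have a: "real (q j) \<le> real (x j)" "real (x j) \<le> real (q j) + 1" using that j by auto
      have "y j \<le> real (x j) / real p" using a p0 by (simp add: y_def divide_right_mono)
      moreover have "real (x j) / real p \<le> y j + 1 / real p"
        using a p0 by (simp add: y_def add_divide_distrib[symmetric] divide_right_mono)
      ultimately have "y j \<le> real (x j) / real p \<and> real (x j) / real p \<le> y j + \<delta> \<and> \<bar>real (x j) / real p - y j\<bar> \<le> \<delta>"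
        using pd dpos by (auto simp: abs_le_iff) }
    then show "\<forall>j<n. \<bar>real (x j) / real p - y j\<bar> \<le> \<delta>" "\<forall>j<n. y j \<le> real (x j) / real p"
      "\<forall>j<n. real (x j) / real p \<le> y j + \<delta>" by blast+
  qed
  have "\<bar>G y i - y i\<bar> \<le> e + \<delta>" if i: "i < n" for i
  proof -
    obtain r s where r: "\<forall>j<n. q j \<le> r j \<and> r j \<le> q j + 1" and s: "\<forall>j<n. q j \<le> s j \<and> s j \<le> q j + 1"
      and rs: "?lab r i \<noteq> ?lab s i" using q2 i by blast
    have rp: "\<forall>j<n. r j \<le> p"
    proof (intro allI impI)
      fix j assume "j < n" then have "r j \<le> q j + 1" "q j < p" using r q1 by auto
      then show "r j \<le> p" by linarith
    qed
    have sp: "\<forall>j<n. s j \<le> p"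
    proof (intro allI impI)
      fix j assume "j < n" then have "s j \<le> q j + 1" "q j < p" using s q1 by auto
      then show "s j \<le> p" by linarith
    qed
    have or: "(?lab r i = 0 \<and> ?lab s i \<noteq> 0) \<or> (?lab s i = 0 \<and> ?lab r i \<noteq> 0)"
      using rs p0 by (auto simp: klab_def Let_def split: if_splits)
    obtain a b where ab: "\<forall>j<n. q j \<le> a j \<and> a j \<le> q j + 1" "\<forall>j<n. q j \<le> b j \<and> b j \<le> q j + 1"
      "\<forall>j<n. a j \<le> p" "\<forall>j<n. b j \<le> p" "?lab a i = 0" "?lab b i \<noteq> 0"
    proof (cases "?lab r i = 0 \<and> ?lab s i \<noteq> 0")
      case True then show ?thesis using that[of r s] r s rp sp by blast
    next
      case False then have "?lab s i = 0 \<and> ?lab r i \<noteq> 0" using or by blast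
      then show ?thesis using that[of s r] r s rp sp by blast
    qed
    define ya where "ya = (\<lambda>j. real (a j) / real p)"
    define yb where "yb = (\<lambda>j. real (b j) / real p)"
    have A: "ya i \<le> G ya i" using lab0[OF ab(5) ab(3) i] ya_def by simp
    have B: "G yb i \<le> yb i" using lab1[OF ab(6) ab(4) i] yb_def by simp
    have ca: "\<bar>G ya i - G y i\<bar> \<le> e"
      using uc[of ya y i] cube[OF ab(3)] ycube close[OF ab(1)] i by (simp add: ya_def)
    have cb: "\<bar>G yb i - G y i\<bar> \<le> e"
      using uc[of yb y i] cube[OF ab(4)] ycube close[OF ab(2)] i by (simp add: yb_def)
    have "y i \<le> ya i" using ge[OF ab(1)] i by (simp add: ya_def)
    moreover have "yb i \<le> y i + \<delta>" using le[OF ab(2)] i by (simp add: yb_def)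
    ultimately show ?thesis using A B ca cb dpos by (simp add: abs_le_iff)
  qed
  then show ?thesis using ycube by blast
qed



definition close :: "real \<Rightarrow> (real \<Rightarrow> real) \<Rightarrow> (real \<Rightarrow> real) \<Rightarrow> bool" where
  "close e u v \<longleftrightarrow> (\<forall>x\<in>{0..1}. \<bar>u x - v x\<bar> \<le> e)"

definition pp :: "(real \<Rightarrow> real) \<Rightarrow> real \<Rightarrow> real" where "pp v = (\<lambda>y. max (v y) 0)"
definition wn :: "(real \<Rightarrow> real) \<Rightarrow> real \<Rightarrow> real" where
  "wn v = (\<lambda>y. pp v y / integral {0..1} (pp v))"
definition Kop :: "(real \<Rightarrow> real \<Rightarrow> real) \<Rightarrow> (real \<Rightarrow> real) \<Rightarrow> real \<Rightarrow> real" where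
  "Kop \<beta> w = (\<lambda>x. integral {0..1} (\<lambda>y. \<beta> x y * (w y)\<^sup>2))"
definition sig :: "(real \<Rightarrow> real) \<Rightarrow> (real \<Rightarrow> real \<Rightarrow> real) \<Rightarrow> (real \<Rightarrow> real) \<Rightarrow> real" where
  "sig rt \<beta> w = integral {0..1} (\<lambda>x. rt x * w x) / integral {0..1} (Kop \<beta> w)"
definition fop :: "(real \<Rightarrow> real) \<Rightarrow> (real \<Rightarrow> real \<Rightarrow> real) \<Rightarrow> (real \<Rightarrow> real) \<Rightarrow> real \<Rightarrow> real" where
  "fop rt \<beta> w = (\<lambda>x. rt x * w x - sig rt \<beta> w * Kop \<beta> w x)"
definition Fop :: "(real \<Rightarrow> real) \<Rightarrow> real \<Rightarrow> real" where
  "Fop f = (\<lambda>x. integral {0..x} f)"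
definition hop :: "(real \<Rightarrow> real) \<Rightarrow> (real \<Rightarrow> real) \<Rightarrow> real \<Rightarrow> real" where
  "hop dt f = (\<lambda>x. Fop f x / dt x)"
definition Phi :: "(real \<Rightarrow> real) \<Rightarrow> (real \<Rightarrow> real) \<Rightarrow> (real \<Rightarrow> real \<Rightarrow> real) \<Rightarrow> (real \<Rightarrow> real) \<Rightarrow> real \<Rightarrow> real" where
  "Phi rt dt \<beta> v = (\<lambda>x. Fop (hop dt (fop rt \<beta> (wn v))) x + (1 - integral {0..1} (Fop (hop dt (fop rt \<beta> (wn v))))))"

lemma int_bound01:
  fixes f :: "real \<Rightarrow> real"
  assumes "continuous_on {0..1} f" "\<And>x. x \<in> {0..1} \<Longrightarrow> \<bar>f x\<bar> \<le> M" "0 \<le> a" "a \<le> b" "b \<le> 1"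
  shows "\<bar>integral {a..b} f\<bar> \<le> M * (b - a)"
proof -
  have "continuous_on {a..b} f" using assms(1) by (rule continuous_on_subset) (use assms in auto)
  then show ?thesis using integral_bound[of a b f M] assms by auto
qed

lemma int_close01:
  fixes f g :: "real \<Rightarrow> real"
  assumes "continuous_on {0..1} f" "continuous_on {0..1} g" "close e f g" "x \<in> {0..1}"
  shows "\<bar>integral {0..x} f - integral {0..x} g\<bar> \<le> e"
proof -
  have cf: "continuous_on {0..x} f" "continuous_on {0..x} g"
    using assms by (auto intro: continuous_on_subset)
  have "integral {0..x} f - integral {0..x} g = integral {0..x} (\<lambda>t. f t - g t)"
    using cf by (simp add: integral_diff integrable_continuous_interval)
  moreover have "\<bar>integral {0..x} (\<lambda>t. f t - g t)\<bar> \<le> e * (x - 0)"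
    using int_bound01[of "\<lambda>t. f t - g t" e 0 x] assms
    by (auto simp: close_def intro!: continuous_intros)
  moreover have "0 \<le> e" using assms(3,4) unfolding close_def by (meson abs_ge_zero order_trans)
  moreover have "e * x \<le> e" using mult_left_le[of x e] assms(4) \<open>0 \<le> e\<close> by auto
  ultimately show ?thesis by simp
qed

lemma int01_close:
  fixes f g :: "real \<Rightarrow> real"
  assumes "continuous_on {0..1} f" "continuous_on {0..1} g" "close e f g"
  shows "\<bar>integral {0..1} f - integral {0..1} g\<bar> \<le> e"
  using int_close01[OF assms, of 1] by simp

lemma div_le_self1: "0 \<le> (x::real) \<Longrightarrow> 1 \<le> c \<Longrightarrow> x / c \<le> x"
  using mult_left_mono[of 1 c x] by (simp add: divide_le_eq)

lemma hk_abs_bound: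
  fixes f g :: "real \<Rightarrow> real"
  assumes "f integrable_on S" "g integrable_on S" "\<And>x. x \<in> S \<Longrightarrow> \<bar>f x\<bar> \<le> g x"
  shows "\<bar>integral S f\<bar> \<le> integral S g"
  using Henstock_Kurzweil_Integration.integral_norm_bound_integral[of f S g] assms by simp

lemma integrable01: "continuous_on {0..1} f \<Longrightarrow> (f::real\<Rightarrow>real) integrable_on {0..1}"
  by (rule integrable_continuous_interval)

locale setting =
  fixes \<beta> :: "real \<Rightarrow> real \<Rightarrow> real" and rt dt :: "real \<Rightarrow> real" and b0 b1 R d0 :: real
  assumes bcont: "continuous_on ({0..1} \<times> {0..1}) (\<lambda>(x,y). \<beta> x y)"
    and b0pos: "0 < b0" and bbnd: "\<And>x y. x \<in> {0..1} \<Longrightarrow> y \<in> {0..1} \<Longrightarrow> b0 \<le> \<beta> x y \<and> \<beta> x y \<le> b1"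
    and rcont: "continuous_on {0..1} rt" and rbnd: "\<And>x. x \<in> {0..1} \<Longrightarrow> 0 \<le> rt x \<and> rt x \<le> R"
    and dcont: "continuous_on {0..1} dt" and d0pos: "0 < d0" and dbnd: "\<And>x. x \<in> {0..1} \<Longrightarrow> d0 \<le> dt x"
    and rnz: "\<exists>x\<in>{0..1}. 0 < rt x"
begin

definition "A = 2 * R / d0"
definition "B = 1 + 2 * A"
definition "B' = 2 * B + 1"

lemma R_nonneg: "0 \<le> R" using rbnd[of 0] by auto
lemma A_nonneg: "0 \<le> A" using R_nonneg d0pos by (simp add: A_def)
lemma B_ge1: "1 \<le> B" using A_nonneg by (simp add: B_def)
lemma B'_ge: "B \<le> B'" "1 \<le> B'" using B_ge1 by (auto simp: B'_def)
lemma b1_pos: "0 < b1" using bbnd[of 0 0] b0pos by auto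

definition inD :: "(real \<Rightarrow> real) \<Rightarrow> bool" where
  "inD v \<longleftrightarrow> continuous_on {0..1} v \<and> (\<forall>x\<in>{0..1}. \<bar>v x\<bar> \<le> B') \<and> integral {0..1} v = 1"
definition inW :: "(real \<Rightarrow> real) \<Rightarrow> bool" where
  "inW w \<longleftrightarrow> continuous_on {0..1} w \<and> (\<forall>x\<in>{0..1}. 0 \<le> w x \<and> w x \<le> B') \<and> integral {0..1} w = 1"

lemma pp_cont: assumes "continuous_on {0..1} v" shows "continuous_on {0..1} (pp v)"
  unfolding pp_def by (intro continuous_on_max continuous_on_const assms)

lemma wn_props:
  assumes "inD v"
  shows "inW (wn v)" "1 \<le> integral {0..1} (pp v)"
proof -
  have cv: "continuous_on {0..1} v" and vb: "\<And>x. x\<in>{0..1} \<Longrightarrow> \<bar>v x\<bar> \<le> B'" and iv: "integral {0..1} v = 1"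
    using assms by (auto simp: inD_def)
  have cp: "continuous_on {0..1} (pp v)" using pp_cont[OF cv] .
  have "integral {0..1} v \<le> integral {0..1} (pp v)"
    by (rule integral_le[OF integrable01[OF cv] integrable01[OF cp]]) (simp add: pp_def)
  then show m1: "1 \<le> integral {0..1} (pp v)" using iv by simp
  have "continuous_on {0..1} (wn v)" unfolding wn_def using m1 by (intro continuous_intros cp) auto
  moreover have "0 \<le> wn v x \<and> wn v x \<le> B'" if "x \<in> {0..1}" for x
  proof -
    have "0 \<le> pp v x" "pp v x \<le> B'" using vb[OF that] B'_ge by (auto simp: pp_def)
    moreover have "pp v x / integral {0..1} (pp v) \<le> pp v x"
      using m1 \<open>0 \<le> pp v x\<close> by (simp add: divide_le_eq mult_le_cancel_left1)
    ultimately show ?thesis using m1 by (auto simp: wn_def)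
  qed
  moreover have "integral {0..1} (wn v) = 1"
    using m1 by (simp add: wn_def)
  ultimately show "inW (wn v)" by (auto simp: inW_def)
qed

lemma wn_lip:
  assumes "inD u" "inD v" "close \<delta> u v"
  shows "close ((1 + B') * \<delta>) (wn u) (wn v)"
proof -
  have cu: "continuous_on {0..1} u" and cv: "continuous_on {0..1} v" and vb: "\<And>x. x\<in>{0..1} \<Longrightarrow> \<bar>v x\<bar> \<le> B'"
    using assms by (auto simp: inD_def)
  have d0: "0 \<le> \<delta>" using assms(3) unfolding close_def by (metis abs_ge_zero atLeastAtMost_iff order_trans zero_le_one order_refl)
  define mu where "mu = integral {0..1} (pp u)"
  define mv where "mv = integral {0..1} (pp v)"
  have mu1: "1 \<le> mu" and mv1: "1 \<le> mv" using wn_props assms by (auto simp: mu_def mv_def)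
  have cpp: "close \<delta> (pp u) (pp v)" using assms(3) by (auto simp: close_def pp_def)
  have dm: "\<bar>mu - mv\<bar> \<le> \<delta>" unfolding mu_def mv_def
    by (rule int01_close[OF pp_cont[OF cu] pp_cont[OF cv] cpp])
  show ?thesis unfolding close_def
  proof
    fix x :: real assume x: "x \<in> {0..1}"
    define a where "a = pp u x" define b where "b = pp v x"
    have ab: "\<bar>a - b\<bar> \<le> \<delta>" using cpp x by (auto simp: close_def a_def b_def)
    have b: "0 \<le> b" "b \<le> B'" using vb[OF x] B'_ge by (auto simp: b_def pp_def)
    have eq: "a / mu - b / mv = (a - b) / mu + b * (mv - mu) / (mu * mv)"
      using mu1 mv1 by (simp add: field_simps)
    have "\<bar>a - b\<bar> * 1 \<le> \<bar>a - b\<bar> * mu" using mu1 by (intro mult_left_mono) auto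
    then have "\<bar>a - b\<bar> / mu \<le> \<bar>a - b\<bar>" using mu1 by (simp add: divide_le_eq)
    then have t1: "\<bar>(a - b) / mu\<bar> \<le> \<delta>" using ab mu1 by simp
    have "\<bar>b * (mv - mu) / (mu * mv)\<bar> = b * \<bar>mv - mu\<bar> / (mu * mv)" using b mu1 mv1 by (simp add: abs_mult)
    also have "\<dots> \<le> b * \<bar>mv - mu\<bar>"
      using b mu1 mv1 mult_mono[of 1 mu 1 mv] by (intro div_le_self1) auto
    also have "\<dots> \<le> B' * \<delta>" using b dm by (simp add: abs_minus_commute mult_mono)
    finally have t2: "\<bar>b * (mv - mu) / (mu * mv)\<bar> \<le> B' * \<delta>" .
    have "\<bar>a / mu - b / mv\<bar> \<le> \<delta> + B' * \<delta>" unfolding eq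
      using t1 t2 abs_triangle_ineq[of "(a - b) / mu" "b * (mv - mu) / (mu * mv)"] by linarith
    then have "\<bar>a / mu - b / mv\<bar> \<le> (1 + B') * \<delta>" by (simp add: algebra_simps)
    then show "\<bar>wn u x - wn v x\<bar> \<le> (1 + B') * \<delta>" by (simp add: wn_def a_def b_def mu_def mv_def)
  qed
qed


lemma b_lo: "x \<in> {0..1} \<Longrightarrow> y \<in> {0..1} \<Longrightarrow> b0 \<le> \<beta> x y" using bbnd by blast
lemma b_hi: "x \<in> {0..1} \<Longrightarrow> y \<in> {0..1} \<Longrightarrow> \<beta> x y \<le> b1" using bbnd by blast

lemma beta_cont_y: "x \<in> {0..1} \<Longrightarrow> continuous_on {0..1} (\<lambda>y. \<beta> x y)"
proof -
  assume x: "x \<in> {0..1}"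
  have "continuous_on {0..1} (\<lambda>y. (x, y))" by (intro continuous_intros)
  moreover have "(\<lambda>y. (x, y)) ` {0..1} \<subseteq> {0..1} \<times> {0..1}" using x by auto
  ultimately show ?thesis using continuous_on_compose2[OF bcont, of "{0..1}" "\<lambda>y. (x,y)"] by simp
qed

lemma beta_uc: "e > 0 \<Longrightarrow> \<exists>d>0. \<forall>x\<in>{0..1}. \<forall>x'\<in>{0..1}. \<forall>y\<in>{0..1}. \<bar>x' - x\<bar> < d \<longrightarrow> \<bar>\<beta> x' y - \<beta> x y\<bar> < e"
proof -
  assume e: "e > 0"
  have "uniformly_continuous_on ({0..1} \<times> {0..1}) (\<lambda>(x,y). \<beta> x y)"
    by (rule compact_uniformly_continuous[OF bcont]) (simp add: compact_Times)
  then obtain d where d: "d > 0" and H: "\<And>z z'. z \<in> {0..1} \<times> {0..1} \<Longrightarrow> z' \<in> {0..1} \<times> {0..1} \<Longrightarrow> dist z' z < d \<Longrightarrow>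
      dist ((\<lambda>(x,y). \<beta> x y) z') ((\<lambda>(x,y). \<beta> x y) z) < e"
    unfolding uniformly_continuous_on_def using e by metis
  show ?thesis
  proof (intro exI[of _ d] conjI ballI impI d)
    fix x x' y :: real assume *: "x \<in> {0..1}" "x' \<in> {0..1}" "y \<in> {0..1}" "\<bar>x' - x\<bar> < d"
    have "dist (x', y) (x, y) < d" using * by (simp add: dist_Pair_Pair dist_real_def)
    then show "\<bar>\<beta> x' y - \<beta> x y\<bar> < e" using H[of "(x,y)" "(x',y)"] * by (simp add: dist_real_def)
  qed
qed

lemma sq_int: "inW w \<Longrightarrow> continuous_on {0..1} (\<lambda>y. (w y)\<^sup>2)"
  by (auto simp: inW_def intro!: continuous_intros)

lemma kint: "inW w \<Longrightarrow> x \<in> {0..1} \<Longrightarrow> continuous_on {0..1} (\<lambda>y. \<beta> x y * (w y)\<^sup>2)"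
  by (intro continuous_intros beta_cont_y sq_int)

lemma w2_bounds:
  assumes "inW w"
  shows "1 \<le> integral {0..1} (\<lambda>y. (w y)\<^sup>2)" "integral {0..1} (\<lambda>y. (w y)\<^sup>2) \<le> B'"
proof -
  have cw: "continuous_on {0..1} w" and wb: "\<And>x. x\<in>{0..1} \<Longrightarrow> 0 \<le> w x \<and> w x \<le> B'" and iw: "integral {0..1} w = 1"
    using assms by (auto simp: inW_def)
  have c2: "continuous_on {0..1} (\<lambda>y. (w y)\<^sup>2)" using sq_int[OF assms] .
  have "0 \<le> integral {0..1} (\<lambda>y. (w y - 1)\<^sup>2)"
    by (rule integral_nonneg) (auto intro!: integrable01 continuous_intros cw)
  also have "integral {0..1} (\<lambda>y. (w y - 1)\<^sup>2) = integral {0..1} (\<lambda>y. (w y)\<^sup>2) - 2 * integral {0..1} w + 1"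
  proof -
    have "(\<lambda>y. (w y - 1)\<^sup>2) = (\<lambda>y. ((w y)\<^sup>2 - 2 * w y) + 1)" by (auto simp: power2_eq_square algebra_simps)
    then show ?thesis
      by (simp add: integral_add integral_diff integrable01 c2 cw continuous_intros)
  qed
  finally show "1 \<le> integral {0..1} (\<lambda>y. (w y)\<^sup>2)" using iw by simp
  have "integral {0..1} (\<lambda>y. (w y)\<^sup>2) \<le> integral {0..1} (\<lambda>y. B' * w y)"
    by (rule integral_le) (auto intro!: integrable01 c2 continuous_intros cw simp: power2_eq_square mult_right_mono wb)
  then show "integral {0..1} (\<lambda>y. (w y)\<^sup>2) \<le> B'" using iw by simp
qed

lemma K_bounds:
  assumes "inW w" "x \<in> {0..1}"
  shows "b0 \<le> Kop \<beta> w x" "Kop \<beta> w x \<le> b1 * B'"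
proof -
  have c2: "continuous_on {0..1} (\<lambda>y. (w y)\<^sup>2)" using sq_int[OF assms(1)] .
  have "integral {0..1} (\<lambda>y. b0 * (w y)\<^sup>2) \<le> Kop \<beta> w x" unfolding Kop_def
    by (rule integral_le) (auto intro!: integrable01 c2 continuous_intros kint assms mult_right_mono b_lo)
  moreover have "b0 * 1 \<le> b0 * integral {0..1} (\<lambda>y. (w y)\<^sup>2)"
    using w2_bounds[OF assms(1)] b0pos by (intro mult_left_mono) auto
  ultimately show "b0 \<le> Kop \<beta> w x" by simp
  have "Kop \<beta> w x \<le> integral {0..1} (\<lambda>y. b1 * (w y)\<^sup>2)" unfolding Kop_def
    by (rule integral_le) (auto intro!: integrable01 c2 continuous_intros kint assms mult_right_mono b_hi)
  moreover have "b1 * integral {0..1} (\<lambda>y. (w y)\<^sup>2) \<le> b1 * B'"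
    using w2_bounds[OF assms(1)] b1_pos by (intro mult_left_mono) auto
  ultimately show "Kop \<beta> w x \<le> b1 * B'" by simp
qed

lemma K_cont:
  assumes "inW w"
  shows "continuous_on {0..1} (Kop \<beta> w)"
  unfolding continuous_on_iff
proof (intro ballI allI impI)
  fix x e :: real assume x: "x \<in> {0..1}" and e: "0 < e"
  have B'p: "0 < B'" using B'_ge by simp
  obtain d where d: "d > 0" and H: "\<forall>x\<in>{0..1}. \<forall>x'\<in>{0..1}. \<forall>y\<in>{0..1}. \<bar>x' - x\<bar> < d \<longrightarrow> \<bar>\<beta> x' y - \<beta> x y\<bar> < e / (2 * B')"
    using beta_uc[of "e / (2 * B')"] e B'p by auto
  show "\<exists>d>0. \<forall>x'\<in>{0..1}. dist x' x < d \<longrightarrow> dist (Kop \<beta> w x') (Kop \<beta> w x) < e"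
  proof (intro exI[of _ d] conjI ballI impI d)
    fix x' assume x': "x' \<in> {0..1}" and dd: "dist x' x < d"
    have c2: "continuous_on {0..1} (\<lambda>y. (w y)\<^sup>2)" using sq_int[OF assms(1)] .
    have "Kop \<beta> w x' - Kop \<beta> w x = integral {0..1} (\<lambda>y. (\<beta> x' y - \<beta> x y) * (w y)\<^sup>2)"
      unfolding Kop_def using kint[OF assms x] kint[OF assms x']
      by (simp add: integral_diff[symmetric] integrable01 left_diff_distrib)
    also have "\<bar>\<dots>\<bar> \<le> integral {0..1} (\<lambda>y. e / (2 * B') * (w y)\<^sup>2)"
    proof (rule hk_abs_bound)
      show "(\<lambda>y. (\<beta> x' y - \<beta> x y) * (w y)\<^sup>2) integrable_on {0..1}"
        by (intro integrable01 continuous_intros beta_cont_y x x' c2)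
      show "(\<lambda>y. e / (2 * B') * (w y)\<^sup>2) integrable_on {0..1}"
        by (intro integrable01 continuous_intros c2)
      fix y :: real assume y: "y \<in> {0..1}"
      have "\<bar>\<beta> x' y - \<beta> x y\<bar> \<le> e / (2 * B')" using H x x' y dd by (simp add: dist_real_def less_imp_le)
      then show "\<bar>(\<beta> x' y - \<beta> x y) * (w y)\<^sup>2\<bar> \<le> e / (2 * B') * (w y)\<^sup>2"
        using mult_right_mono[of "\<bar>\<beta> x' y - \<beta> x y\<bar>" "e / (2 * B')" "(w y)\<^sup>2"] by (simp add: abs_mult)
    qed
    also have "\<dots> = e / (2 * B') * integral {0..1} (\<lambda>y. (w y)\<^sup>2)" by simp
    also have "\<dots> \<le> e / (2 * B') * B'" using w2_bounds[OF assms] e B'p by (intro mult_left_mono) auto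
    also have "\<dots> < e" using e B'p by simp
    finally show "dist (Kop \<beta> w x') (Kop \<beta> w x) < e" by (simp add: dist_real_def)
  qed
qed

lemma K_lip:
  assumes "inW w1" "inW w2" "close \<delta> w1 w2"
  shows "close (2 * b1 * B' * \<delta>) (Kop \<beta> w1) (Kop \<beta> w2)"
  unfolding close_def
proof
  fix x :: real assume x: "x \<in> {0..1}"
  have wb1: "\<And>y. y\<in>{0..1} \<Longrightarrow> 0 \<le> w1 y \<and> w1 y \<le> B'" and wb2: "\<And>y. y\<in>{0..1} \<Longrightarrow> 0 \<le> w2 y \<and> w2 y \<le> B'"
    using assms by (auto simp: inW_def)
  have "Kop \<beta> w1 x - Kop \<beta> w2 x = integral {0..1} (\<lambda>y. \<beta> x y * ((w1 y)\<^sup>2 - (w2 y)\<^sup>2))"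
    unfolding Kop_def using kint[OF assms(1) x] kint[OF assms(2) x]
    by (simp add: integral_diff[symmetric] integrable01 right_diff_distrib)
  moreover have "\<bar>integral {0..1} (\<lambda>y. \<beta> x y * ((w1 y)\<^sup>2 - (w2 y)\<^sup>2))\<bar> \<le> 2 * b1 * B' * \<delta> * (1 - 0)"
  proof (rule int_bound01)
    show "continuous_on {0..1} (\<lambda>y. \<beta> x y * ((w1 y)\<^sup>2 - (w2 y)\<^sup>2))"
      by (intro continuous_intros beta_cont_y x sq_int assms)
    fix y :: real assume y: "y \<in> {0..1}"
    have fac: "(w1 y)\<^sup>2 - (w2 y)\<^sup>2 = (w1 y - w2 y) * (w1 y + w2 y)" by (simp add: power2_eq_square algebra_simps)
    have "\<bar>(w1 y)\<^sup>2 - (w2 y)\<^sup>2\<bar> = \<bar>w1 y - w2 y\<bar> * (w1 y + w2 y)"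
      unfolding fac abs_mult using wb1[OF y] wb2[OF y] by simp
    also have "\<dots> \<le> \<delta> * (2 * B')"
      using assms(3) y wb1[OF y] wb2[OF y] by (intro mult_mono) (auto simp: close_def)
    finally have a: "\<bar>(w1 y)\<^sup>2 - (w2 y)\<^sup>2\<bar> \<le> \<delta> * (2 * B')" .
    have "\<bar>\<beta> x y * ((w1 y)\<^sup>2 - (w2 y)\<^sup>2)\<bar> = \<beta> x y * \<bar>(w1 y)\<^sup>2 - (w2 y)\<^sup>2\<bar>"
      using bbnd[OF x y] b0pos by (simp add: abs_mult)
    also have "\<dots> \<le> b1 * (\<delta> * (2 * B'))" using a bbnd[OF x y] b0pos by (intro mult_mono) auto
    finally show "\<bar>\<beta> x y * ((w1 y)\<^sup>2 - (w2 y)\<^sup>2)\<bar> \<le> 2 * b1 * B' * \<delta>" by (simp add: algebra_simps)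
  qed auto
  ultimately show "\<bar>Kop \<beta> w1 x - Kop \<beta> w2 x\<bar> \<le> 2 * b1 * B' * \<delta>" by simp
qed

end


context setting begin

definition "Lk = 2 * b1 * B'"
definition "Ls = R / b0 + R * Lk / b0\<^sup>2"
definition "Lf = R + R / b0 * Lk + Ls * (b1 * B')"

lemma L_nonneg: "0 \<le> Lk" "0 \<le> Ls" "0 \<le> Lf"
  using b1_pos B'_ge R_nonneg b0pos by (auto simp: Lk_def Ls_def Lf_def)

lemma a_bnd:
  assumes "inW w"
  shows "0 \<le> integral {0..1} (\<lambda>x. rt x * w x)" "integral {0..1} (\<lambda>x. rt x * w x) \<le> R"
proof -
  have cw: "continuous_on {0..1} w" and wb: "\<And>x. x\<in>{0..1} \<Longrightarrow> 0 \<le> w x \<and> w x \<le> B'" and iw: "integral {0..1} w = 1"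
    using assms by (auto simp: inW_def)
  show "0 \<le> integral {0..1} (\<lambda>x. rt x * w x)"
    by (rule integral_nonneg) (auto intro!: integrable01 continuous_intros cw rcont simp: rbnd wb)
  have "integral {0..1} (\<lambda>x. rt x * w x) \<le> integral {0..1} (\<lambda>x. R * w x)"
    by (rule integral_le) (auto intro!: integrable01 continuous_intros cw rcont mult_right_mono simp: rbnd wb)
  then show "integral {0..1} (\<lambda>x. rt x * w x) \<le> R" using iw by simp
qed

lemma k_bnd:
  assumes "inW w"
  shows "b0 \<le> integral {0..1} (Kop \<beta> w)" "integral {0..1} (Kop \<beta> w) \<le> b1 * B'"
proof -
  have "integral {0..1} (\<lambda>x::real. b0) \<le> integral {0..1} (Kop \<beta> w)"
    by (rule integral_le) (auto intro!: integrable01 K_cont assms K_bounds)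
  then show "b0 \<le> integral {0..1} (Kop \<beta> w)" by simp
  have "integral {0..1} (Kop \<beta> w) \<le> integral {0..1} (\<lambda>x::real. b1 * B')"
    by (rule integral_le) (auto intro!: integrable01 K_cont assms K_bounds)
  then show "integral {0..1} (Kop \<beta> w) \<le> b1 * B'" by simp
qed

lemma sig_bnd:
  assumes "inW w"
  shows "0 \<le> sig rt \<beta> w" "sig rt \<beta> w \<le> R / b0"
proof -
  note a = a_bnd[OF assms] and k = k_bnd[OF assms]
  show "0 \<le> sig rt \<beta> w" unfolding sig_def using a k b0pos by simp
  show "sig rt \<beta> w \<le> R / b0" unfolding sig_def using a k b0pos R_nonneg
    by (meson frac_le)
qed

lemma f_cont: "inW w \<Longrightarrow> continuous_on {0..1} (fop rt \<beta> w)"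
  unfolding fop_def by (intro continuous_intros rcont K_cont) (auto simp: inW_def)

lemma f_int0:
  assumes "inW w"
  shows "integral {0..1} (fop rt \<beta> w) = 0"
proof -
  have cw: "continuous_on {0..1} w" using assms by (auto simp: inW_def)
  have "integral {0..1} (fop rt \<beta> w) = integral {0..1} (\<lambda>x. rt x * w x) - sig rt \<beta> w * integral {0..1} (Kop \<beta> w)"
    unfolding fop_def
    by (simp add: integral_diff integrable01 continuous_intros cw rcont K_cont assms)
  also have "\<dots> = 0" unfolding sig_def using k_bnd[OF assms] b0pos by simp
  finally show ?thesis .
qed

lemma f_absbnd:
  assumes "inW w" "x \<in> {0..1}"
  shows "\<bar>fop rt \<beta> w x\<bar> \<le> rt x * w x + sig rt \<beta> w * Kop \<beta> w x"
proof -
  have "0 \<le> rt x * w x" using assms rbnd by (auto simp: inW_def)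
  moreover have "0 \<le> sig rt \<beta> w * Kop \<beta> w x" using sig_bnd[OF assms(1)] K_bounds[OF assms] b0pos by simp
  ultimately show ?thesis unfolding fop_def by linarith
qed

lemma F_bnd:
  assumes "inW w" "x \<in> {0..1}"
  shows "\<bar>Fop (fop rt \<beta> w) x\<bar> \<le> 2 * R"
proof -
  have cw: "continuous_on {0..1} w" using assms by (auto simp: inW_def)
  define p where "p = (\<lambda>x. rt x * w x + sig rt \<beta> w * Kop \<beta> w x)"
  have cp: "continuous_on {0..1} p" unfolding p_def by (intro continuous_intros rcont cw K_cont assms)
  have pn: "\<And>y. y \<in> {0..1} \<Longrightarrow> 0 \<le> p y"
    using f_absbnd[OF assms(1)] unfolding p_def by (meson abs_ge_zero order_trans)
  have cf: "continuous_on {0..1} (fop rt \<beta> w)" by (rule f_cont[OF assms(1)])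
  have sub: "{0..x} \<subseteq> {0..1}" using assms by auto
  have "\<bar>Fop (fop rt \<beta> w) x\<bar> \<le> integral {0..x} p" unfolding Fop_def
  proof (rule hk_abs_bound)
    show "fop rt \<beta> w integrable_on {0..x}"
      by (rule integrable_continuous_interval[OF continuous_on_subset[OF cf sub]])
    show "p integrable_on {0..x}"
      by (rule integrable_continuous_interval[OF continuous_on_subset[OF cp sub]])
    fix y assume "y \<in> {0..x}"
    then have "y \<in> {0..1}" using sub by blast
    then show "\<bar>fop rt \<beta> w y\<bar> \<le> p y" unfolding p_def by (rule f_absbnd[OF assms(1)])
  qed
  also have "\<dots> \<le> integral {0..1} p"
  proof -
    have "integral {0..x} p + integral {x..1} p = integral {0..1} p"
      using Henstock_Kurzweil_Integration.integral_combine[where a=0 and c=x and b=1 and f=p] assms integrable01[OF cp] by auto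
    moreover have "0 \<le> integral {x..1} p"
      using assms by (intro integral_nonneg integrable_continuous_interval continuous_on_subset[OF cp] pn) auto
    ultimately show ?thesis by linarith
  qed
  also have "\<dots> = integral {0..1} (\<lambda>x. rt x * w x) + sig rt \<beta> w * integral {0..1} (Kop \<beta> w)"
    unfolding p_def by (simp add: integral_add integrable01 continuous_intros cw rcont K_cont assms)
  also have "\<dots> = 2 * integral {0..1} (\<lambda>x. rt x * w x)"
    unfolding sig_def using k_bnd[OF assms(1)] b0pos by simp
  also have "\<dots> \<le> 2 * R" using a_bnd[OF assms(1)] by simp
  finally show ?thesis .
qed

lemma f_lip:
  assumes "inW w1" "inW w2" "close \<delta> w1 w2"
  shows "close (Lf * \<delta>) (fop rt \<beta> w1) (fop rt \<beta> w2)"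
proof -
  have cw1: "continuous_on {0..1} w1" and cw2: "continuous_on {0..1} w2"
    and wb1: "\<And>y. y\<in>{0..1} \<Longrightarrow> 0 \<le> w1 y \<and> w1 y \<le> B'" and wb2: "\<And>y. y\<in>{0..1} \<Longrightarrow> 0 \<le> w2 y \<and> w2 y \<le> B'"
    using assms by (auto simp: inW_def)
  have d0: "0 \<le> \<delta>" using assms(3) unfolding close_def by (metis abs_ge_zero atLeastAtMost_iff order_trans zero_le_one order_refl)
  define a1 where "a1 = integral {0..1} (\<lambda>x. rt x * w1 x)"
  define a2 where "a2 = integral {0..1} (\<lambda>x. rt x * w2 x)"
  define k1 where "k1 = integral {0..1} (Kop \<beta> w1)"
  define k2 where "k2 = integral {0..1} (Kop \<beta> w2)"
  have cr: "close (R * \<delta>) (\<lambda>x. rt x * w1 x) (\<lambda>x. rt x * w2 x)"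
    unfolding close_def
  proof
    fix x :: real assume x: "x \<in> {0..1}"
    have "\<bar>rt x * w1 x - rt x * w2 x\<bar> = rt x * \<bar>w1 x - w2 x\<bar>"
      using rbnd[OF x] by (simp add: abs_mult flip: right_diff_distrib)
    also have "\<dots> \<le> R * \<delta>" using rbnd[OF x] assms(3) x by (intro mult_mono) (auto simp: close_def)
    finally show "\<bar>rt x * w1 x - rt x * w2 x\<bar> \<le> R * \<delta>" .
  qed
  have da: "\<bar>a1 - a2\<bar> \<le> R * \<delta>" unfolding a1_def a2_def
    by (rule int01_close[OF _ _ cr]) (auto intro!: continuous_intros rcont cw1 cw2)
  have kl: "close (Lk * \<delta>) (Kop \<beta> w1) (Kop \<beta> w2)" using K_lip[OF assms] by (simp add: Lk_def)
  have dk: "\<bar>k1 - k2\<bar> \<le> Lk * \<delta>" unfolding k1_def k2_def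
    by (rule int01_close[OF K_cont[OF assms(1)] K_cont[OF assms(2)] kl])
  have k1b: "b0 \<le> k1" and k2b: "b0 \<le> k2" using k_bnd assms by (auto simp: k1_def k2_def)
  have a2b: "0 \<le> a2" "a2 \<le> R" using a_bnd[OF assms(2)] by (auto simp: a2_def)
  have s1: "sig rt \<beta> w1 = a1 / k1" and s2: "sig rt \<beta> w2 = a2 / k2" by (simp_all add: sig_def a1_def a2_def k1_def k2_def)
  have ds: "\<bar>a1 / k1 - a2 / k2\<bar> \<le> Ls * \<delta>"
  proof -
    have eq: "a1 / k1 - a2 / k2 = (a1 - a2) / k1 + a2 * (k2 - k1) / (k1 * k2)"
      using k1b k2b b0pos by (simp add: field_simps)
    have t1: "\<bar>(a1 - a2) / k1\<bar> \<le> R * \<delta> / b0"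
    proof -
      have k1p: "0 < k1" using k1b b0pos by linarith
      have "0 \<le> R * \<delta>" using da by (meson abs_ge_zero order_trans)
      then have "\<bar>a1 - a2\<bar> / k1 \<le> R * \<delta> / b0" using da k1b b0pos by (intro frac_le) auto
      then show ?thesis using k1p by simp
    qed
    have "\<bar>a2 * (k2 - k1) / (k1 * k2)\<bar> = a2 * \<bar>k2 - k1\<bar> / (k1 * k2)"
      using a2b k1b k2b b0pos by (simp add: abs_mult)
    also have "\<dots> \<le> R * (Lk * \<delta>) / b0\<^sup>2"
    proof (rule frac_le)
      show "0 \<le> R * (Lk * \<delta>)" using R_nonneg L_nonneg d0 by simp
      show "a2 * \<bar>k2 - k1\<bar> \<le> R * (Lk * \<delta>)" using a2b dk by (intro mult_mono) (auto simp: abs_minus_commute)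
      show "0 < b0\<^sup>2" using b0pos by simp
      show "b0\<^sup>2 \<le> k1 * k2" using k1b k2b b0pos by (simp add: power2_eq_square mult_mono)
    qed
    finally have t2: "\<bar>a2 * (k2 - k1) / (k1 * k2)\<bar> \<le> R * (Lk * \<delta>) / b0\<^sup>2" .
    have "\<bar>a1 / k1 - a2 / k2\<bar> \<le> R * \<delta> / b0 + R * (Lk * \<delta>) / b0\<^sup>2"
      unfolding eq using t1 t2 by linarith
    also have "\<dots> = Ls * \<delta>" by (simp add: Ls_def algebra_simps)
    finally show ?thesis .
  qed
  show ?thesis unfolding close_def
  proof
    fix x :: real assume x: "x \<in> {0..1}"
    have K1: "\<bar>Kop \<beta> w1 x - Kop \<beta> w2 x\<bar> \<le> Lk * \<delta>" using kl x by (auto simp: close_def)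
    have K2: "0 \<le> Kop \<beta> w2 x" "Kop \<beta> w2 x \<le> b1 * B'" using K_bounds[OF assms(2) x] b0pos by auto
    have sg1: "0 \<le> sig rt \<beta> w1" "sig rt \<beta> w1 \<le> R / b0" using sig_bnd[OF assms(1)] by auto
    have r1: "\<bar>rt x * w1 x - rt x * w2 x\<bar> \<le> R * \<delta>" using cr x by (auto simp: close_def)
    have eq: "fop rt \<beta> w1 x - fop rt \<beta> w2 x = (rt x * w1 x - rt x * w2 x)
        - (sig rt \<beta> w1 * (Kop \<beta> w1 x - Kop \<beta> w2 x) + (sig rt \<beta> w1 - sig rt \<beta> w2) * Kop \<beta> w2 x)"
      by (simp add: fop_def algebra_simps)
    have t2: "\<bar>sig rt \<beta> w1 * (Kop \<beta> w1 x - Kop \<beta> w2 x)\<bar> \<le> R / b0 * (Lk * \<delta>)"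
      unfolding abs_mult using sg1 K1 by (intro mult_mono) auto
    have t3: "\<bar>(sig rt \<beta> w1 - sig rt \<beta> w2) * Kop \<beta> w2 x\<bar> \<le> Ls * \<delta> * (b1 * B')"
      unfolding abs_mult s1 s2 using ds K2 L_nonneg d0 by (intro mult_mono) auto
    have "\<bar>fop rt \<beta> w1 x - fop rt \<beta> w2 x\<bar> \<le> R * \<delta> + R / b0 * (Lk * \<delta>) + Ls * \<delta> * (b1 * B')"
      unfolding eq
      using r1 t2 t3 abs_triangle_ineq4[of "rt x * w1 x - rt x * w2 x" "sig rt \<beta> w1 * (Kop \<beta> w1 x - Kop \<beta> w2 x) + (sig rt \<beta> w1 - sig rt \<beta> w2) * Kop \<beta> w2 x"]
        abs_triangle_ineq[of "sig rt \<beta> w1 * (Kop \<beta> w1 x - Kop \<beta> w2 x)" "(sig rt \<beta> w1 - sig rt \<beta> w2) * Kop \<beta> w2 x"]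
      by linarith
    also have "\<dots> = Lf * \<delta>" by (simp add: Lf_def algebra_simps)
    finally show "\<bar>fop rt \<beta> w1 x - fop rt \<beta> w2 x\<bar> \<le> Lf * \<delta>" .
  qed
qed

end


lemma Fop_cont: "continuous_on {0..1} f \<Longrightarrow> continuous_on {0..1} (Fop (f::real\<Rightarrow>real))"
  unfolding Fop_def by (rule indefinite_integral_continuous_1[OF integrable01])

lemma Fop0[simp]: "Fop f 0 = 0" by (simp add: Fop_def)

lemma Fop_diff:
  assumes "continuous_on {0..1} (f::real\<Rightarrow>real)" "0 \<le> y" "y \<le> x" "x \<le> 1"
  shows "Fop f x - Fop f y = integral {y..x} f"
proof -
  have "continuous_on {0..x} f" using assms by (auto intro: continuous_on_subset)
  then have "integral {0..y} f + integral {y..x} f = integral {0..x} f"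
    using assms by (intro Henstock_Kurzweil_Integration.integral_combine integrable_continuous_interval) auto
  then show ?thesis by (simp add: Fop_def)
qed

lemma Fop_xlip:
  assumes "continuous_on {0..1} (f::real\<Rightarrow>real)" "\<And>x. x \<in> {0..1} \<Longrightarrow> \<bar>f x\<bar> \<le> M" "x \<in> {0..1}" "y \<in> {0..1}"
  shows "\<bar>Fop f x - Fop f y\<bar> \<le> M * \<bar>x - y\<bar>"
proof (cases "y \<le> x")
  case True
  then show ?thesis using Fop_diff[OF assms(1), of y x] int_bound01[OF assms(1,2), of y x] assms by auto
next
  case False
  then show ?thesis using Fop_diff[OF assms(1), of x y] int_bound01[OF assms(1,2), of x y] assms
    by (auto simp: abs_minus_commute)
qed

lemma Fop_bnd:
  assumes "continuous_on {0..1} (f::real\<Rightarrow>real)" "\<And>x. x \<in> {0..1} \<Longrightarrow> \<bar>f x\<bar> \<le> M" "x \<in> {0..1}"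
  shows "\<bar>Fop f x\<bar> \<le> M"
proof -
  have "0 \<le> M" using assms(2)[of 0] by auto
  moreover have "M * x \<le> M" using mult_left_le[of x M] assms(3) \<open>0 \<le> M\<close> by auto
  ultimately show ?thesis using Fop_xlip[OF assms(1,2,3), of 0] assms(3) by simp
qed

context setting begin

definition "LP = 2 * (Lf * (1 + B') / d0)"

lemma LP_nonneg: "0 \<le> LP" using L_nonneg B'_ge d0pos by (simp add: LP_def)

lemma dt_nz: "x \<in> {0..1} \<Longrightarrow> dt x \<noteq> 0" using dbnd[of x] d0pos by auto

lemma h_cont: "inW w \<Longrightarrow> continuous_on {0..1} (hop dt (fop rt \<beta> w))"
  unfolding hop_def
  by (intro continuous_intros Fop_cont f_cont dcont) (auto simp: dt_nz)

lemma h_bnd: "inW w \<Longrightarrow> x \<in> {0..1} \<Longrightarrow> \<bar>hop dt (fop rt \<beta> w) x\<bar> \<le> A"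
proof -
  assume w: "inW w" and x: "x \<in> {0..1}"
  have "\<bar>Fop (fop rt \<beta> w) x / dt x\<bar> = \<bar>Fop (fop rt \<beta> w) x\<bar> / dt x" using dbnd[OF x] d0pos by simp
  also have "\<dots> \<le> 2 * R / d0" using F_bnd[OF w x] dbnd[OF x] d0pos R_nonneg by (intro frac_le) auto
  finally show ?thesis by (simp add: hop_def A_def)
qed

lemma h_lip:
  assumes "inW w1" "inW w2" "close \<delta> w1 w2"
  shows "close (Lf * \<delta> / d0) (hop dt (fop rt \<beta> w1)) (hop dt (fop rt \<beta> w2))"
  unfolding close_def
proof
  fix x :: real assume x: "x \<in> {0..1}"
  have "\<bar>Fop (fop rt \<beta> w1) x - Fop (fop rt \<beta> w2) x\<bar> \<le> Lf * \<delta>"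
    unfolding Fop_def using int_close01[OF f_cont[OF assms(1)] f_cont[OF assms(2)] f_lip[OF assms] x] .
  then have "\<bar>Fop (fop rt \<beta> w1) x - Fop (fop rt \<beta> w2) x\<bar> / dt x \<le> Lf * \<delta> / d0"
    using dbnd[OF x] d0pos by (intro frac_le) auto
  then show "\<bar>hop dt (fop rt \<beta> w1) x - hop dt (fop rt \<beta> w2) x\<bar> \<le> Lf * \<delta> / d0"
    using dbnd[OF x] d0pos by (simp add: hop_def diff_divide_distrib[symmetric])
qed

lemma Phi_props:
  assumes "inD v"
  shows "inD (Phi rt dt \<beta> v)" "\<And>x. x \<in> {0..1} \<Longrightarrow> \<bar>Phi rt dt \<beta> v x\<bar> \<le> B"
    "\<And>x y. x \<in> {0..1} \<Longrightarrow> y \<in> {0..1} \<Longrightarrow> \<bar>Phi rt dt \<beta> v x - Phi rt dt \<beta> v y\<bar> \<le> A * \<bar>x - y\<bar>"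
proof -
  have w: "inW (wn v)" using wn_props[OF assms] by simp
  define h where "h = hop dt (fop rt \<beta> (wn v))"
  have ch: "continuous_on {0..1} h" unfolding h_def by (rule h_cont[OF w])
  have hb: "\<And>x. x \<in> {0..1} \<Longrightarrow> \<bar>h x\<bar> \<le> A" unfolding h_def by (rule h_bnd[OF w])
  have cg: "continuous_on {0..1} (Fop h)" by (rule Fop_cont[OF ch])
  have gb: "\<And>x. x \<in> {0..1} \<Longrightarrow> \<bar>Fop h x\<bar> \<le> A" by (rule Fop_bnd[OF ch hb])
  have ig: "\<bar>integral {0..1} (Fop h)\<bar> \<le> A" using int_bound01[OF cg gb, of 0 1] by simp
  have P: "Phi rt dt \<beta> v = (\<lambda>x. Fop h x + (1 - integral {0..1} (Fop h)))" by (simp add: Phi_def h_def)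
  show bnd: "\<And>x. x \<in> {0..1} \<Longrightarrow> \<bar>Phi rt dt \<beta> v x\<bar> \<le> B"
    unfolding P B_def abs_le_iff using gb[unfolded abs_le_iff] ig[unfolded abs_le_iff] by fastforce
  show "\<And>x y. x \<in> {0..1} \<Longrightarrow> y \<in> {0..1} \<Longrightarrow> \<bar>Phi rt dt \<beta> v x - Phi rt dt \<beta> v y\<bar> \<le> A * \<bar>x - y\<bar>"
    unfolding P using Fop_xlip[OF ch hb] by simp
  have "continuous_on {0..1} (Phi rt dt \<beta> v)" unfolding P by (intro continuous_intros cg)
  moreover have "integral {0..1} (Phi rt dt \<beta> v) = 1" unfolding P
    by (simp add: integral_add integrable01 cg)
  ultimately show "inD (Phi rt dt \<beta> v)" using bnd B'_ge unfolding inD_def by (meson order_trans)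
qed

lemma Phi_lip:
  assumes "inD u" "inD v" "close \<delta> u v"
  shows "close (LP * \<delta>) (Phi rt dt \<beta> u) (Phi rt dt \<beta> v)"
proof -
  have wu: "inW (wn u)" and wv: "inW (wn v)" using wn_props assms by auto
  have cw: "close ((1 + B') * \<delta>) (wn u) (wn v)" by (rule wn_lip[OF assms])
  define hu where "hu = hop dt (fop rt \<beta> (wn u))"
  define hv where "hv = hop dt (fop rt \<beta> (wn v))"
  have chu: "continuous_on {0..1} hu" unfolding hu_def by (rule h_cont[OF wu])
  have chv: "continuous_on {0..1} hv" unfolding hv_def by (rule h_cont[OF wv])
  have ch: "close (Lf * ((1 + B') * \<delta>) / d0) hu hv" unfolding hu_def hv_def by (rule h_lip[OF wu wv cw])
  have cg: "close (Lf * ((1 + B') * \<delta>) / d0) (Fop hu) (Fop hv)"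
    unfolding close_def Fop_def using int_close01[OF chu chv ch] by blast
  have ig: "\<bar>integral {0..1} (Fop hu) - integral {0..1} (Fop hv)\<bar> \<le> Lf * ((1 + B') * \<delta>) / d0"
    by (rule int01_close[OF Fop_cont[OF chu] Fop_cont[OF chv] cg])
  have Pu: "Phi rt dt \<beta> u = (\<lambda>x. Fop hu x + (1 - integral {0..1} (Fop hu)))" by (simp add: Phi_def hu_def)
  have Pv: "Phi rt dt \<beta> v = (\<lambda>x. Fop hv x + (1 - integral {0..1} (Fop hv)))" by (simp add: Phi_def hv_def)
  have e: "LP * \<delta> = Lf * ((1 + B') * \<delta>) / d0 + Lf * ((1 + B') * \<delta>) / d0" by (simp add: LP_def)
  show ?thesis unfolding close_def
  proof
    fix x :: real assume x: "x \<in> {0..1}"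
    have "\<bar>Fop hu x - Fop hv x\<bar> \<le> Lf * ((1 + B') * \<delta>) / d0" using cg x by (auto simp: close_def)
    then show "\<bar>Phi rt dt \<beta> u x - Phi rt dt \<beta> v x\<bar> \<le> LP * \<delta>"
      unfolding Pu Pv e abs_le_iff using ig[unfolded abs_le_iff] by linarith
  qed
qed

end


definition hat :: "nat \<Rightarrow> nat \<Rightarrow> real \<Rightarrow> real" where
  "hat N i x = max 0 (1 - \<bar>real N * x - real i\<bar>)"
definition Wsum :: "nat \<Rightarrow> real \<Rightarrow> real" where
  "Wsum N x = (\<Sum>i\<le>N. hat N i x)"
definition interp :: "nat \<Rightarrow> (nat \<Rightarrow> real) \<Rightarrow> real \<Rightarrow> real" where
  "interp N p x = (\<Sum>i\<le>N. p i * hat N i x) / Wsum N x"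

lemma hat_nonneg: "0 \<le> hat N i x" by (simp add: hat_def)

lemma hat_pos_near: "0 < hat N i x \<Longrightarrow> \<bar>real N * x - real i\<bar> < 1"
  by (simp add: hat_def)

lemma Wsum_pos:
  assumes "x \<in> {0..1}"
  shows "1/2 \<le> Wsum N x"
proof -
  define i where "i = nat \<lfloor>real N * x + 1/2\<rfloor>"
  have Nx: "0 \<le> real N * x" "real N * x \<le> real N" using assms by (auto simp: mult_left_le)
  have fl: "real_of_int \<lfloor>real N * x + 1/2\<rfloor> \<le> real N * x + 1/2" "real N * x + 1/2 < real_of_int \<lfloor>real N * x + 1/2\<rfloor> + 1"
    by linarith+
  have fl0: "0 \<le> \<lfloor>real N * x + 1/2\<rfloor>" using Nx by simp
  have ri: "real i = real_of_int \<lfloor>real N * x + 1/2\<rfloor>" using fl0 by (simp add: i_def)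
  have iN: "i \<le> N"
  proof -
    have "real i < real N + 1" using ri fl Nx by linarith
    then show ?thesis by linarith
  qed
  have "\<bar>real N * x - real i\<bar> \<le> 1/2" unfolding abs_le_iff using ri fl by linarith
  then have "1/2 \<le> hat N i x" by (simp add: hat_def)
  also have "hat N i x \<le> Wsum N x" unfolding Wsum_def
    by (rule member_le_sum) (use iN hat_nonneg in auto)
  finally show ?thesis .
qed

lemma avg_bound:
  assumes "x \<in> {0..1}" "\<And>i. i \<le> N \<Longrightarrow> 0 < hat N i x \<Longrightarrow> \<bar>a i\<bar> \<le> M"
  shows "\<bar>(\<Sum>i\<le>N. a i * hat N i x) / Wsum N x\<bar> \<le> M"
proof -
  have W: "0 < Wsum N x" using Wsum_pos[OF assms(1), of N] by linarith
  have "\<bar>\<Sum>i\<le>N. a i * hat N i x\<bar> \<le> (\<Sum>i\<le>N. \<bar>a i * hat N i x\<bar>)" by (rule sum_abs)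
  also have "\<dots> \<le> (\<Sum>i\<le>N. M * hat N i x)"
  proof (rule sum_mono)
    fix i assume i: "i \<in> {..N}"
    show "\<bar>a i * hat N i x\<bar> \<le> M * hat N i x"
    proof (cases "hat N i x = 0")
      case True then show ?thesis by simp
    next
      case False
      then have "0 < hat N i x" using hat_nonneg[of N i x] by linarith
      then show ?thesis using assms(2)[of i] i by (simp add: abs_mult hat_nonneg mult_right_mono)
    qed
  qed
  also have "\<dots> = M * Wsum N x" by (simp add: Wsum_def sum_distrib_left)
  finally show ?thesis using W by (simp add: divide_le_eq)
qed

lemma interp_cont: "continuous_on {0..1} (interp N p)"
proof -
  have "\<And>x. x \<in> {0..1} \<Longrightarrow> Wsum N x \<noteq> 0"
  proof -
    fix x :: real assume "x \<in> {0..1}"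
    then have "1/2 \<le> Wsum N x" by (rule Wsum_pos)
    then show "Wsum N x \<noteq> 0" by linarith
  qed
  then show ?thesis unfolding interp_def Wsum_def hat_def
    by (intro continuous_intros) (auto simp: Wsum_def hat_def)
qed

lemma interp_diff:
  assumes "x \<in> {0..1}" "\<And>i. i \<le> N \<Longrightarrow> \<bar>p i - q i\<bar> \<le> M"
  shows "\<bar>interp N p x - interp N q x\<bar> \<le> M"
proof -
  have "interp N p x - interp N q x = (\<Sum>i\<le>N. (p i - q i) * hat N i x) / Wsum N x"
    by (simp add: interp_def diff_divide_distrib[symmetric] sum_subtractf left_diff_distrib)
  then show ?thesis using avg_bound[OF assms(1), of N "\<lambda>i. p i - q i" M] assms(2) by simp
qed

lemma interp_bnd:
  assumes "x \<in> {0..1}" "\<And>i. i \<le> N \<Longrightarrow> \<bar>p i\<bar> \<le> M"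
  shows "\<bar>interp N p x\<bar> \<le> M"
  using interp_diff[OF assms(1), of N p "\<lambda>_. 0" M] assms(2) by (simp add: interp_def)

lemma interp_approx:
  assumes "x \<in> {0..1}" "0 < N" "\<And>s t. s \<in> {0..1} \<Longrightarrow> t \<in> {0..1} \<Longrightarrow> \<bar>u s - u t\<bar> \<le> A * \<bar>s - t\<bar>" "0 \<le> A"
  shows "\<bar>interp N (\<lambda>i. u (real i / real N)) x - u x\<bar> \<le> A / real N"
proof -
  have W: "0 < Wsum N x" using Wsum_pos[OF assms(1), of N] by linarith
  have ux: "u x = (\<Sum>i\<le>N. u x * hat N i x) / Wsum N x" using W by (simp add: Wsum_def sum_distrib_left[symmetric])
  have "interp N (\<lambda>i. u (real i / real N)) x - u x = (\<Sum>i\<le>N. u (real i / real N) * hat N i x) / Wsum N x - (\<Sum>i\<le>N. u x * hat N i x) / Wsum N x"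
    unfolding ux[symmetric] by (simp add: interp_def)
  also have "\<dots> = (\<Sum>i\<le>N. (u (real i / real N) - u x) * hat N i x) / Wsum N x"
    by (simp add: diff_divide_distrib[symmetric] sum_subtractf left_diff_distrib)
  also have "\<bar>\<dots>\<bar> \<le> A / real N"
  proof (rule avg_bound[OF assms(1)])
    fix i assume i: "i \<le> N" and h: "0 < hat N i x"
    have "\<bar>real N * x - real i\<bar> < 1" using hat_pos_near[OF h] .
    then have "\<bar>x - real i / real N\<bar> \<le> 1 / real N"
    proof -
      have e1: "real N * (x - real i / real N) = real N * x - real i" using assms(2) by (simp add: right_diff_distrib)
      have "real N * \<bar>x - real i / real N\<bar> = \<bar>real N * (x - real i / real N)\<bar>" by (simp add: abs_mult)
      then have "real N * \<bar>x - real i / real N\<bar> < 1" using e1 \<open>\<bar>real N * x - real i\<bar> < 1\<close> by simp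
      then show ?thesis using assms(2) by (simp add: field_simps)
    qed
    moreover have "real i / real N \<in> {0..1}" using i assms(2) by (auto simp: divide_le_eq_1)
    ultimately have "\<bar>u (real i / real N) - u x\<bar> \<le> A * (1 / real N)"
      using assms(3)[of "real i / real N" x] assms(1,4) mult_left_mono[of "\<bar>x - real i / real N\<bar>" "1 / real N" A]
      by (simp add: abs_minus_commute)
    then show "\<bar>u (real i / real N) - u x\<bar> \<le> A / real N" by simp
  qed
  finally show ?thesis .
qed


context setting begin

lemma approx_fp:
  assumes e: "0 < e"
  shows "\<exists>X. inD X \<and> close e X (Phi rt dt \<beta> X)"
proof -
  have Bp: "0 < B" using B_ge1 by simp
  have A0: "0 \<le> A" by (rule A_nonneg)
  obtain N :: nat where N: "4 * A / e < real N" using reals_Archimedean2 by blast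
  have "0 \<le> 4 * A / e" using A0 e by simp
  then have "0 < real N" using N by linarith
  then have N0: "0 < N" by simp
  have AN: "A / real N \<le> e / 4"
  proof -
    have "4 * A < e * real N" using N e by (simp add: field_simps)
    then show ?thesis using N0 by (simp add: field_simps)
  qed
  define c where "c = 2 * LP + 1"
  have cp: "0 < c" using LP_nonneg by (simp add: c_def)
  define \<delta> where "\<delta> = e / (8 * B * c)"
  have dpos: "0 < \<delta>" using e Bp cp by (simp add: \<delta>_def)
  have "2 * B * c * \<delta> = e / 4" using Bp cp by (simp add: \<delta>_def field_simps)
  moreover have "2 * LP * \<delta> + \<delta> = c * \<delta>" by (simp add: c_def algebra_simps)
  ultimately have dd: "2 * B * (2 * LP * \<delta> + \<delta>) = e / 4" by (simp add: mult.assoc)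
  define P where "P y = (\<lambda>i. - B + 2 * B * y i)" for y :: "nat \<Rightarrow> real"
  define Xof where "Xof y = (\<lambda>x. interp N (P y) x + (1 - integral {0..1} (interp N (P y))))" for y
  define G where "G y = (\<lambda>i. (Phi rt dt \<beta> (Xof y) (real i / real N) + B) / (2 * B))" for y
  have Pb: "\<bar>P y i\<bar> \<le> B" if "\<forall>j<Suc N. 0 \<le> y j \<and> y j \<le> 1" "i \<le> N" for y i
  proof -
    have "0 \<le> y i" "y i \<le> 1" using that by auto
    then have "0 \<le> 2 * B * y i" "2 * B * y i \<le> 2 * B" using Bp by auto
    then show ?thesis by (simp add: P_def abs_le_iff)
  qed
  have XD: "inD (Xof y)" if y: "\<forall>j<Suc N. 0 \<le> y j \<and> y j \<le> 1" for y
  proof -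
    have ib: "\<And>x. x \<in> {0..1} \<Longrightarrow> \<bar>interp N (P y) x\<bar> \<le> B" using interp_bnd Pb[OF y] by blast
    have ii: "\<bar>integral {0..1} (interp N (P y))\<bar> \<le> B" using int_bound01[OF interp_cont ib, of 0 1] by simp
    have "continuous_on {0..1} (Xof y)" unfolding Xof_def by (intro continuous_intros interp_cont)
    moreover have "\<bar>Xof y x\<bar> \<le> B'" if "x \<in> {0..1}" for x
      using ib[OF that] ii unfolding Xof_def B'_def abs_le_iff by linarith
    moreover have "integral {0..1} (Xof y) = 1" unfolding Xof_def
      by (simp add: integral_add integrable01 interp_cont)
    ultimately show ?thesis by (auto simp: inD_def)
  qed
  have iN: "real i / real N \<in> {0..1}" if "i < Suc N" for i using that N0 by (auto simp: divide_le_eq_1)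
  have inc: "0 \<le> G y i \<and> G y i \<le> 1" if "\<forall>j<Suc N. 0 \<le> y j \<and> y j \<le> 1" "i < Suc N" for y i
  proof -
    have "\<bar>Phi rt dt \<beta> (Xof y) (real i / real N)\<bar> \<le> B" using Phi_props(2)[OF XD[OF that(1)] iN[OF that(2)]] .
    then show ?thesis using Bp by (simp add: G_def abs_le_iff divide_le_eq_1)
  qed
  have uc: "\<bar>G y i - G z i\<bar> \<le> 2 * LP * \<delta>"
    if y: "\<forall>j<Suc N. 0 \<le> y j \<and> y j \<le> 1" and z: "\<forall>j<Suc N. 0 \<le> z j \<and> z j \<le> 1"
      and yz: "\<forall>j<Suc N. \<bar>y j - z j\<bar> \<le> \<delta>" and i: "i < Suc N" for y z i
  proof -
    have pd: "\<bar>P y j - P z j\<bar> \<le> 2 * B * \<delta>" if "j \<le> N" for j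
    proof -
      have "\<bar>P y j - P z j\<bar> = 2 * B * \<bar>y j - z j\<bar>" using Bp by (simp add: P_def abs_mult flip: right_diff_distrib)
      then show ?thesis using yz that Bp by simp
    qed
    have ci: "close (2 * B * \<delta>) (interp N (P y)) (interp N (P z))"
      unfolding close_def using interp_diff pd by blast
    have cint: "\<bar>integral {0..1} (interp N (P y)) - integral {0..1} (interp N (P z))\<bar> \<le> 2 * B * \<delta>"
      by (rule int01_close[OF interp_cont interp_cont ci])
    have cx: "close (4 * B * \<delta>) (Xof y) (Xof z)" unfolding close_def
    proof
      fix x :: real assume "x \<in> {0..1}"
      then have "\<bar>interp N (P y) x - interp N (P z) x\<bar> \<le> 2 * B * \<delta>" using ci by (auto simp: close_def)
      then show "\<bar>Xof y x - Xof z x\<bar> \<le> 4 * B * \<delta>" using cint unfolding Xof_def abs_le_iff by linarith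
    qed
    have "close (LP * (4 * B * \<delta>)) (Phi rt dt \<beta> (Xof y)) (Phi rt dt \<beta> (Xof z))"
      by (rule Phi_lip[OF XD[OF y] XD[OF z] cx])
    then have pb: "\<bar>Phi rt dt \<beta> (Xof y) (real i / real N) - Phi rt dt \<beta> (Xof z) (real i / real N)\<bar> \<le> LP * (4 * B * \<delta>)"
      using iN[OF i] by (auto simp: close_def)
    have "G y i - G z i = (Phi rt dt \<beta> (Xof y) (real i / real N) - Phi rt dt \<beta> (Xof z) (real i / real N)) / (2 * B)"
      using Bp by (simp add: G_def diff_divide_distrib[symmetric])
    then have "\<bar>G y i - G z i\<bar> = \<bar>Phi rt dt \<beta> (Xof y) (real i / real N) - Phi rt dt \<beta> (Xof z) (real i / real N)\<bar> / (2 * B)"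
      using Bp by simp
    also have "\<dots> \<le> LP * (4 * B * \<delta>) / (2 * B)" using pb Bp by (intro divide_right_mono) auto
    also have "\<dots> = 2 * LP * \<delta>" using Bp by (simp add: field_simps)
    finally show ?thesis .
  qed
  obtain y where y: "\<forall>j<Suc N. 0 \<le> y j \<and> y j \<le> 1" and yfp: "\<forall>i<Suc N. \<bar>G y i - y i\<bar> \<le> 2 * LP * \<delta> + \<delta>"
    using kuhn_approx[of "Suc N" G \<delta> "2 * LP * \<delta>"] inc uc dpos by blast
  define X where "X = Xof y"
  define U where "U = Phi rt dt \<beta> X"
  have XDy: "inD X" unfolding X_def by (rule XD[OF y])
  have UD: "inD U" unfolding U_def by (rule Phi_props(1)[OF XDy])
  have Ulip: "\<And>s t. s \<in> {0..1} \<Longrightarrow> t \<in> {0..1} \<Longrightarrow> \<bar>U s - U t\<bar> \<le> A * \<bar>s - t\<bar>"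
    unfolding U_def by (rule Phi_props(3)[OF XDy])
  have ug: "\<bar>P y i - U (real i / real N)\<bar> \<le> e / 4" if "i \<le> N" for i
  proof -
    have "U (real i / real N) = 2 * B * G y i - B" using Bp by (simp add: G_def U_def X_def)
    then have "\<bar>P y i - U (real i / real N)\<bar> = 2 * B * \<bar>G y i - y i\<bar>"
      using Bp by (simp add: P_def abs_mult flip: right_diff_distrib abs_minus_commute)
    also have "\<dots> \<le> 2 * B * (2 * LP * \<delta> + \<delta>)" using yfp that Bp by (simp add: less_Suc_eq_le)
    finally show ?thesis using dd by simp
  qed
  have c1: "\<bar>interp N (P y) t - U t\<bar> \<le> e / 2" if t: "t \<in> {0..1}" for t
  proof -
    have "\<bar>interp N (P y) t - interp N (\<lambda>i. U (real i / real N)) t\<bar> \<le> e / 4"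
      by (rule interp_diff[OF t]) (use ug in auto)
    moreover have "\<bar>interp N (\<lambda>i. U (real i / real N)) t - U t\<bar> \<le> A / real N"
      by (rule interp_approx[OF t N0 Ulip A0])
    ultimately show ?thesis using AN unfolding abs_le_iff by linarith
  qed
  have cU: "continuous_on {0..1} U" using UD by (simp add: inD_def)
  have iU: "integral {0..1} U = 1" using UD by (simp add: inD_def)
  have c2: "\<bar>integral {0..1} (interp N (P y)) - integral {0..1} U\<bar> \<le> e / 2"
    by (rule int01_close[OF interp_cont cU]) (use c1 in \<open>auto simp: close_def\<close>)
  have "close e X U" unfolding close_def
  proof
    fix t :: real assume t: "t \<in> {0..1}"
    show "\<bar>X t - U t\<bar> \<le> e" using c1[OF t] c2 iU unfolding X_def Xof_def abs_le_iff by linarith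
  qed
  then show ?thesis using XDy unfolding U_def by blast
qed

end


lemma abs_le_eps_zero: "(\<And>e. 0 < e \<Longrightarrow> \<bar>a::real\<bar> \<le> c * e) \<Longrightarrow> 0 \<le> c \<Longrightarrow> a = 0"
proof -
  assume H: "\<And>e. 0 < e \<Longrightarrow> \<bar>a\<bar> \<le> c * e" and c: "0 \<le> c"
  have "\<bar>a\<bar> \<le> 0 + e" if "0 < e" for e
  proof -
    have "0 < e / (c + 1)" using that c by simp
    then have "\<bar>a\<bar> \<le> c * (e / (c + 1))" by (rule H)
    also have "\<dots> \<le> e" using c that by (simp add: field_simps)
    finally show ?thesis by simp
  qed
  then have "\<bar>a\<bar> \<le> 0" by (rule field_le_epsilon)
  then show ?thesis by simp
qed

context setting begin

lemma fixed_point: "\<exists>u. inD u \<and> (\<forall>x\<in>{0..1}. Phi rt dt \<beta> u x = u x)"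
proof -
  have "\<forall>k::nat. \<exists>X. inD X \<and> close (1 / (real k + 1)) X (Phi rt dt \<beta> X)"
    using approx_fp by simp
  then obtain X where X: "\<And>k. inD (X k)" "\<And>k. close (1 / (real k + 1)) (X k) (Phi rt dt \<beta> (X k))"
    by metis
  define U where "U k = Phi rt dt \<beta> (X k)" for k
  have UD: "inD (U k)" for k unfolding U_def by (rule Phi_props(1)[OF X(1)])
  have Ub: "\<And>k x. x \<in> {0..1} \<Longrightarrow> \<bar>U k x\<bar> \<le> B" unfolding U_def by (rule Phi_props(2)[OF X(1)])
  have Ul: "\<And>k x y. x \<in> {0..1} \<Longrightarrow> y \<in> {0..1} \<Longrightarrow> \<bar>U k x - U k y\<bar> \<le> A * \<bar>x - y\<bar>"
    unfolding U_def by (rule Phi_props(3)[OF X(1)])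
  obtain g s where g: "continuous_on {0..1} g" and s: "strict_mono (s :: nat \<Rightarrow> nat)"
    and conv: "\<And>e. 0 < e \<Longrightarrow> \<exists>N. \<forall>n x. n \<ge> N \<and> x \<in> {0..1} \<longrightarrow> norm (U (s n) x - g x) < e"
  proof (rule Arzela_Ascoli[of "{0..1}" U B])
    show "compact {0..1::real}" by simp
    show "\<And>n x. x \<in> {0..1} \<Longrightarrow> norm (U n x) \<le> B" using Ub by simp
    fix x e :: real assume x: "x \<in> {0..1}" and e: "0 < e"
    show "\<exists>d>0. \<forall>n y. y \<in> {0..1} \<and> norm (x - y) < d \<longrightarrow> norm (U n x - U n y) < e"
    proof (intro exI[of _ "e / (A + 1)"] conjI allI impI)
      show "0 < e / (A + 1)" using e A_nonneg by simp
      fix n y assume y: "y \<in> {0..1} \<and> norm (x - y) < e / (A + 1)"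
      have "\<bar>U n x - U n y\<bar> \<le> A * \<bar>x - y\<bar>" using Ul x y by blast
      also have "\<dots> \<le> A * (e / (A + 1))" using y A_nonneg by (intro mult_left_mono) auto
      also have "\<dots> < e" using e A_nonneg by (simp add: field_simps)
      finally show "norm (U n x - U n y) < e" by simp
    qed
  qed blast
  have cU: "continuous_on {0..1} (U k)" and iU: "integral {0..1} (U k) = 1" for k
    using UD[of k] by (auto simp: inD_def)
  have gb: "\<bar>g x\<bar> \<le> B" if x: "x \<in> {0..1}" for x
  proof (rule field_le_epsilon)
    fix e :: real assume e: "0 < e"
    obtain N where "\<forall>n x. n \<ge> N \<and> x \<in> {0..1} \<longrightarrow> norm (U (s n) x - g x) < e" using conv[OF e] by blast
    then have "\<bar>U (s N) x - g x\<bar> < e" using x by auto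
    then show "\<bar>g x\<bar> \<le> B + e" using Ub[OF x, of "s N"] by linarith
  qed
  have gi: "integral {0..1} g = 1"
  proof -
    have "integral {0..1} g - 1 = 0"
    proof (rule abs_le_eps_zero)
      fix e :: real assume e: "0 < e"
      obtain N where N: "\<forall>n x. n \<ge> N \<and> x \<in> {0..1} \<longrightarrow> norm (U (s n) x - g x) < e" using conv[OF e] by blast
      have "close e (U (s N)) g" using N by (auto simp: close_def less_imp_le)
      then have "\<bar>integral {0..1} (U (s N)) - integral {0..1} g\<bar> \<le> e" by (rule int01_close[OF cU g])
      then show "\<bar>integral {0..1} g - 1\<bar> \<le> 1 * e" using iU[of "s N"] by simp
    qed simp
    then show ?thesis by simp
  qed
  have gD: "inD g" unfolding inD_def using g gi gb B'_ge by (meson order_trans)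
  have "Phi rt dt \<beta> g x = g x" if x: "x \<in> {0..1}" for x
  proof -
    have "Phi rt dt \<beta> g x - g x = 0"
    proof (rule abs_le_eps_zero)
      fix e :: real assume e: "0 < e"
      obtain N where N: "\<forall>n x. n \<ge> N \<and> x \<in> {0..1} \<longrightarrow> norm (U (s n) x - g x) < e" using conv[OF e] by blast
      obtain M :: nat where M: "1 / e < real M" using reals_Archimedean2 by blast
      define n where "n = max N M"
      have sn: "n \<le> s n" using seq_suble[OF s] .
      have "1 / e < real (s n) + 1" using M sn by (simp add: n_def)
      then have "1 / (real (s n) + 1) < e" using e by (simp add: field_simps)
      then have cX: "close e (X (s n)) (U (s n))" using X(2)[of "s n"]
        unfolding close_def U_def by (meson less_imp_le order_trans)
      have cUg: "close e (U (s n)) g" using N by (auto simp: close_def n_def less_imp_le)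
      have cXg: "close (2 * e) (X (s n)) g" using cX cUg unfolding close_def abs_le_iff by fastforce
      have "close (LP * (2 * e)) (Phi rt dt \<beta> (X (s n))) (Phi rt dt \<beta> g)" by (rule Phi_lip[OF X(1) gD cXg])
      then have a: "\<bar>U (s n) x - Phi rt dt \<beta> g x\<bar> \<le> LP * (2 * e)" using x by (auto simp: close_def U_def)
      have b: "\<bar>U (s n) x - g x\<bar> \<le> e" using cUg x by (auto simp: close_def)
      show "\<bar>Phi rt dt \<beta> g x - g x\<bar> \<le> (2 * LP + 1) * e"
        using a b unfolding abs_le_iff by (simp add: algebra_simps)
    qed (use LP_nonneg in simp)
    then show ?thesis by simp
  qed
  then show ?thesis using gD by blast
qed

end


lemma pos_int:
  fixes g :: "real \<Rightarrow> real"
  assumes "a < b" "continuous_on {a..b} g" "\<And>t. t \<in> {a..b} \<Longrightarrow> 0 \<le> g t" "t0 \<in> {a..b}" "0 < g t0"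
  shows "0 < integral {a..b} g"
proof -
  have "0 \<le> integral {a..b} g" using assms by (intro integral_nonneg integrable_continuous_interval) auto
  moreover have "integral {a..b} g \<noteq> 0" using integral_eq_0_iff[of a b g] assms by auto
  ultimately show ?thesis by linarith
qed

lemma neg_int:
  fixes g :: "real \<Rightarrow> real"
  assumes "a < b" "continuous_on {a..b} g" "\<And>t. t \<in> {a..b} \<Longrightarrow> g t \<le> 0" "t0 \<in> {a..b}" "g t0 < 0"
  shows "integral {a..b} g < 0"
proof -
  have "0 < integral {a..b} (\<lambda>t. - g t)"
    using assms by (intro pos_int[of a b _ t0] continuous_intros) auto
  then show ?thesis by simp
qed

lemma int_zero_on:
  assumes "\<And>x. x \<in> S \<Longrightarrow> f x = (0::real)"
  shows "integral S f = 0"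
  using Henstock_Kurzweil_Integration.integral_cong[of S f "\<lambda>_. 0"] assms by simp

context setting begin

lemma core:
  "\<exists>U H \<sigma>. (\<forall>x\<in>{0..1}. 0 < U x)
      \<and> (\<forall>x\<in>{0..1}. (U has_real_derivative H x) (at x within {0..1}))
      \<and> continuous_on {0..1} H \<and> H 0 = 0 \<and> H 1 = 0 \<and> 0 < \<sigma>
      \<and> (\<forall>x\<in>{0<..<1}. ((\<lambda>t. dt t * H t) has_real_derivative
             (rt x * U x - \<sigma> * integral {0..1} (\<lambda>y. \<beta> x y * (U y)\<^sup>2))) (at x))
      \<and> integral {0..1} (\<lambda>x. rt x * U x) = \<sigma> * integral {0..1} (\<lambda>x. integral {0..1} (\<lambda>y. \<beta> x y * (U y)\<^sup>2))"
proof -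
  obtain u where uD: "inD u" and fp: "\<And>x. x \<in> {0..1} \<Longrightarrow> Phi rt dt \<beta> u x = u x"
    using fixed_point by blast
  define m where "m = integral {0..1} (pp u)"
  define w where "w = wn u"
  define f where "f = fop rt \<beta> w"
  define h where "h = hop dt f"
  define g where "g = Fop h"
  define c where "c = 1 - integral {0..1} g"
  define U where "U = (\<lambda>x. g x + c)"
  define \<sigma> where "\<sigma> = sig rt \<beta> w"
  have wW: "inW w" and m1: "1 \<le> m" using wn_props[OF uD] by (auto simp: w_def m_def)
  have cu: "continuous_on {0..1} u" and iu: "integral {0..1} u = 1" using uD by (auto simp: inD_def)
  have cw: "continuous_on {0..1} w" using wW by (auto simp: inW_def)
  have wdef: "\<And>x. w x = max (u x) 0 / m" by (simp add: w_def wn_def pp_def m_def)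
  have cf: "continuous_on {0..1} f" unfolding f_def by (rule f_cont[OF wW])
  have ch: "continuous_on {0..1} h" unfolding h_def f_def by (rule h_cont[OF wW])
  have cg: "continuous_on {0..1} g" unfolding g_def by (rule Fop_cont[OF ch])
  have F0: "Fop f 0 = 0" by simp
  have F1: "Fop f 1 = 0" unfolding f_def Fop_def using f_int0[OF wW] by simp
  have uU: "\<And>x. x \<in> {0..1} \<Longrightarrow> u x = U x"
    using fp by (simp add: Phi_def U_def g_def h_def f_def w_def c_def)
  have cU: "continuous_on {0..1} U" unfolding U_def by (intro continuous_intros cg)
  have iU: "integral {0..1} U = 1"
    using iu Henstock_Kurzweil_Integration.integral_cong[of "{0..1}" u U] uU by simp
  have hF: "\<And>x. x \<in> {0..1} \<Longrightarrow> dt x * h x = Fop f x"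
    using dt_nz by (simp add: h_def hop_def)
  have hdef: "\<And>x. h x = Fop f x / dt x" by (simp add: h_def hop_def)
  have dtp: "\<And>x. x \<in> {0..1} \<Longrightarrow> 0 < dt x" using dbnd d0pos by (meson less_le_trans)
  have fdef: "\<And>x. f x = rt x * w x - \<sigma> * Kop \<beta> w x" by (simp add: f_def fop_def \<sigma>_def)
  define a where "a = integral {0..1} (\<lambda>x. rt x * w x)"
  define k where "k = integral {0..1} (Kop \<beta> w)"
  have kpos: "b0 \<le> k" using k_bnd[OF wW] by (simp add: k_def)
  have sig_eq: "\<sigma> = a / k" by (simp add: \<sigma>_def sig_def a_def k_def)
  have apos: "0 < a"
  proof (rule ccontr)
    assume "\<not> 0 < a"
    then have a0: "a = 0" using a_bnd[OF wW] by (simp add: a_def)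
    have rw0: "\<forall>x\<in>{0..1}. rt x * w x = 0"
      using integral_eq_0_iff[of 0 1 "\<lambda>x. rt x * w x"] a0 rbnd wW
      by (auto simp: a_def inW_def intro!: continuous_intros rcont cw)
    have s0: "\<sigma> = 0" using sig_eq a0 by simp
    have f0: "\<And>x. x \<in> {0..1} \<Longrightarrow> f x = 0" using rw0 s0 fdef by simp
    have Ff0: "\<And>x. x \<in> {0..1} \<Longrightarrow> Fop f x = 0"
      unfolding Fop_def by (rule int_zero_on) (use f0 in auto)
    have g0: "\<And>x. x \<in> {0..1} \<Longrightarrow> g x = 0"
      unfolding g_def Fop_def by (rule int_zero_on) (use Ff0 hdef in auto)
    have Uc: "\<And>x. x \<in> {0..1} \<Longrightarrow> U x = c" using g0 by (simp add: U_def)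
    have "integral {0..1} U = c"
      using Henstock_Kurzweil_Integration.integral_cong[of "{0..1}" U "\<lambda>_. c"] Uc by simp
    then have c1: "c = 1" using iU by simp
    have u1: "\<And>x. x \<in> {0..1} \<Longrightarrow> u x = 1" using uU Uc c1 by simp
    have "m = integral {0..1} (\<lambda>_::real. 1::real)"
      unfolding m_def by (rule Henstock_Kurzweil_Integration.integral_cong) (simp add: pp_def u1)
    then have "m = 1" by simp
    then have "\<And>x. x \<in> {0..1} \<Longrightarrow> w x = 1" using u1 wdef by simp
    then have "\<forall>x\<in>{0..1}. rt x = 0" using rw0 by simp
    then show False using rnz by auto
  qed
  have sigpos: "0 < \<sigma>" using apos kpos b0pos sig_eq by simp
  obtain x0 where x0: "x0 \<in> {0..1}" and xmin: "\<And>y. y \<in> {0..1} \<Longrightarrow> U x0 \<le> U y"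
    using continuous_attains_inf[of "{0..1}" U] cU by auto
  have Upos0: "0 < U x0"
  proof (rule ccontr)
    assume "\<not> 0 < U x0"
    then have U0: "U x0 \<le> 0" by simp
    have wx0: "w x0 = 0" using U0 uU[OF x0] wdef by simp
    obtain y0 where y0: "y0 \<in> {0..1}" "0 < U y0"
    proof (rule ccontr)
      assume "\<not> thesis"
      then have "\<And>y. y \<in> {0..1} \<Longrightarrow> U y \<le> 0" using that by force
      then have "integral {0..1} U \<le> integral {0..1} (\<lambda>_::real. 0::real)"
        by (intro integral_le integrable01 cU) auto
      then show False using iU by simp
    qed
    have wy0: "0 < w y0" using y0 uU[OF y0(1)] wdef m1 by simp
    have Kpos: "0 < Kop \<beta> w x0" unfolding Kop_def
    proof (rule pos_int[of 0 1 _ y0])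
      show "continuous_on {0..1} (\<lambda>y. \<beta> x0 y * (w y)\<^sup>2)" by (rule kint[OF wW x0])
      show "\<And>t. t \<in> {0..1} \<Longrightarrow> 0 \<le> \<beta> x0 t * (w t)\<^sup>2" using b_lo[OF x0] b0pos
        by (metis less_le_trans less_imp_le zero_le_power2 mult_nonneg_nonneg)
      show "0 < \<beta> x0 y0 * (w y0)\<^sup>2" using b_lo[OF x0 y0(1)] b0pos wy0 by simp
    qed (use y0 in auto)
    have fx0: "f x0 < 0" using fdef[of x0] wx0 sigpos Kpos by simp
    obtain \<delta> where dp: "0 < \<delta>" and dH: "\<And>t. t \<in> {0..1} \<Longrightarrow> \<bar>t - x0\<bar> < \<delta> \<Longrightarrow> f t < 0"
    proof -
      obtain d where d: "d > 0" "\<forall>t\<in>{0..1}. dist t x0 < d \<longrightarrow> dist (f t) (f x0) < - f x0"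
        using cf x0 fx0 unfolding continuous_on_iff by (metis neg_0_less_iff_less)
      show ?thesis
      proof (rule that[of d])
        show "0 < d" by (rule d(1))
        fix t assume "t \<in> {0..1}" "\<bar>t - x0\<bar> < d"
        then have "\<bar>f t - f x0\<bar> < - f x0" using d(2) by (auto simp: dist_real_def)
        then show "f t < 0" unfolding abs_less_iff by linarith
      qed
    qed
    have caseA: False if A1: "x0 < 1" and A2: "Fop f x0 \<le> 0"
    proof -
      define t1 where "t1 = min (x0 + \<delta>/2) 1"
      have t1: "x0 < t1" "t1 \<le> 1" "t1 \<in> {0..1}" using A1 dp x0 by (auto simp: t1_def)
      have fneg: "\<And>t. t \<in> {x0..t1} \<Longrightarrow> f t < 0"
        using dH x0 t1 dp by (auto simp: t1_def abs_le_iff)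
      have hneg: "h t < 0" if t: "t \<in> {x0<..t1}" for t
      proof -
        have "Fop f t - Fop f x0 = integral {x0..t} f" using Fop_diff[OF cf, of x0 t] x0 t t1 by auto
        also have "\<dots> < 0"
        proof (rule neg_int[of x0 t f x0])
          show "continuous_on {x0..t} f" using cf x0 t t1 by (auto intro: continuous_on_subset)
          show "\<And>s. s \<in> {x0..t} \<Longrightarrow> f s \<le> 0" using t fneg by (metis atLeastAtMost_iff greaterThanAtMost_iff less_imp_le order_trans)
        qed (use t fneg in auto)
        finally have "Fop f t < 0" using A2 by linarith
        moreover have "0 < dt t" using dtp x0 t t1 by auto
        ultimately show ?thesis using hdef by (simp add: divide_neg_pos)
      qed
      have h0: "h x0 \<le> 0" using hdef A2 dtp[OF x0] by (simp add: divide_nonpos_pos)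
      have "g t1 - g x0 = integral {x0..t1} h" unfolding g_def using Fop_diff[OF ch, of x0 t1] x0 t1 by auto
      also have "\<dots> < 0"
      proof (rule neg_int[of x0 t1 h t1])
        show "continuous_on {x0..t1} h" using ch x0 t1 by (auto intro: continuous_on_subset)
        show "\<And>t. t \<in> {x0..t1} \<Longrightarrow> h t \<le> 0" using h0 hneg by (metis atLeastAtMost_iff greaterThanAtMost_iff less_imp_le order_le_less)
      qed (use t1 hneg in auto)
      finally have "U t1 < U x0" by (simp add: U_def)
      then show False using xmin[OF t1(3)] by simp
    qed
    have caseB: False if B1: "0 < x0" and B2: "0 \<le> Fop f x0"
    proof -
      define t0 where "t0 = max (x0 - \<delta>/2) 0"
      have t0: "t0 < x0" "0 \<le> t0" "t0 \<in> {0..1}" using B1 dp x0 by (auto simp: t0_def)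
      have fneg: "\<And>t. t \<in> {t0..x0} \<Longrightarrow> f t < 0"
        using dH x0 t0 dp by (auto simp: t0_def abs_le_iff)
      have hpos: "0 < h t" if t: "t \<in> {t0..<x0}" for t
      proof -
        have "Fop f x0 - Fop f t = integral {t..x0} f" using Fop_diff[OF cf, of t x0] x0 t t0 by auto
        also have "\<dots> < 0"
        proof (rule neg_int[of t x0 f x0])
          show "continuous_on {t..x0} f" using cf x0 t t0 by (auto intro: continuous_on_subset)
          show "\<And>s. s \<in> {t..x0} \<Longrightarrow> f s \<le> 0" using t fneg by (metis atLeastAtMost_iff atLeastLessThan_iff less_imp_le order_trans)
        qed (use t fneg t0 in auto)
        finally have "0 < Fop f t" using B2 by linarith
        moreover have "0 < dt t" using dtp x0 t t0 by auto
        ultimately show ?thesis using hdef by simp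
      qed
      have h0: "0 \<le> h x0" using hdef B2 dtp[OF x0] by simp
      have "g x0 - g t0 = integral {t0..x0} h" unfolding g_def using Fop_diff[OF ch, of t0 x0] x0 t0 by auto
      also have "\<dots> > 0"
      proof (rule pos_int[of t0 x0 h t0])
        show "continuous_on {t0..x0} h" using ch x0 t0 by (auto intro: continuous_on_subset)
        show "\<And>t. t \<in> {t0..x0} \<Longrightarrow> 0 \<le> h t" using h0 hpos by (metis atLeastAtMost_iff atLeastLessThan_iff less_imp_le order_le_less)
      qed (use t0 hpos in auto)
      finally have "U t0 < U x0" by (simp add: U_def)
      then show False using xmin[OF t0(3)] by simp
    qed
    show False
    proof (cases "x0 < 1 \<and> Fop f x0 \<le> 0")
      case True then show False using caseA by blast
    next
      case False
      then have "x0 = 1 \<or> 0 < Fop f x0" using x0 by auto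
      moreover have "x0 \<noteq> 0 \<or> Fop f x0 \<le> 0" using F0 by auto
      ultimately show False using caseB F1 x0 by fastforce
    qed
  qed
  have Upos: "\<And>x. x \<in> {0..1} \<Longrightarrow> 0 < U x" using Upos0 xmin by (meson less_le_trans)
  have "m = integral {0..1} u"
    unfolding m_def by (rule Henstock_Kurzweil_Integration.integral_cong) (use Upos uU in \<open>auto simp: pp_def\<close>)
  then have m_1: "m = 1" using iu by simp
  have wU: "\<And>x. x \<in> {0..1} \<Longrightarrow> w x = U x" using wdef m_1 uU Upos by fastforce
  have KU: "\<And>x. Kop \<beta> w x = integral {0..1} (\<lambda>y. \<beta> x y * (U y)\<^sup>2)"
    unfolding Kop_def by (rule Henstock_Kurzweil_Integration.integral_cong) (simp add: wU)
  have Uder: "(U has_real_derivative h x) (at x within {0..1})" if x: "x \<in> {0..1}" for x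
  proof -
    have "(g has_real_derivative h x) (at x within {0..1})"
      unfolding g_def Fop_def by (rule integral_has_real_derivative[OF ch x])
    then show ?thesis unfolding U_def by (intro derivative_eq_intros) auto
  qed
  have h0: "h 0 = 0" and h1: "h 1 = 0" using hdef F0 F1 by simp_all
  have dder: "((\<lambda>t. dt t * h t) has_real_derivative (rt x * U x - \<sigma> * integral {0..1} (\<lambda>y. \<beta> x y * (U y)\<^sup>2))) (at x)"
    if x: "x \<in> {0<..<1}" for x
  proof -
    have "(Fop f has_real_derivative f x) (at x within {0..1})"
      unfolding Fop_def using x by (intro integral_has_real_derivative[OF cf]) auto
    then have "(Fop f has_real_derivative f x) (at x)" using x by (simp add: at_within_Icc_at)
    then have "((\<lambda>t. dt t * h t) has_real_derivative f x) (at x)"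
      by (rule has_field_derivative_transform_within_open[of _ _ _ "{0<..<1}"]) (use x hF in auto)
    moreover have "f x = rt x * U x - \<sigma> * integral {0..1} (\<lambda>y. \<beta> x y * (U y)\<^sup>2)"
      using fdef[of x] wU[of x] KU[of x] x by simp
    ultimately show ?thesis by simp
  qed
  have "integral {0..1} (\<lambda>x. rt x * U x) = a"
    unfolding a_def by (rule Henstock_Kurzweil_Integration.integral_cong) (simp add: wU)
  moreover have "integral {0..1} (\<lambda>x. integral {0..1} (\<lambda>y. \<beta> x y * (U y)\<^sup>2)) = k"
    unfolding k_def by (rule Henstock_Kurzweil_Integration.integral_cong) (simp add: KU)
  moreover have "a = \<sigma> * k" using sig_eq kpos b0pos by simp
  ultimately have integ: "integral {0..1} (\<lambda>x. rt x * U x) = \<sigma> * integral {0..1} (\<lambda>x. integral {0..1} (\<lambda>y. \<beta> x y * (U y)\<^sup>2))"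
    by simp
  show ?thesis
    using Upos Uder ch h0 h1 sigpos dder integ by blast
qed

end


lemma ext_C1:
  assumes "C1_open_bounded f M"
  obtains g where "continuous_on {0..1} g" "\<And>x. x \<in> {0<..<1} \<Longrightarrow> g x = f x"
    "\<And>x. x \<in> {0<..<1} \<Longrightarrow> \<bar>f x\<bar> \<le> M"
proof -
  obtain f' where der: "\<And>x. x \<in> {0<..<1} \<Longrightarrow> (f has_real_derivative f' x) (at x)"
    and bnd: "\<And>x y. x \<in> {0<..<1} \<Longrightarrow> y \<in> {0<..<1} \<Longrightarrow> \<bar>f x\<bar> + \<bar>f' y\<bar> \<le> M"
    using assms unfolding C1_open_bounded_def by blast
  have fb: "\<bar>f' y\<bar> \<le> M" if "y \<in> {0<..<1}" for y
    using bnd[OF that that] abs_ge_zero[of "f y"] by linarith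
  have fxb: "\<bar>f x\<bar> \<le> M" if "x \<in> {0<..<1}" for x
    using bnd[OF that that] abs_ge_zero[of "f' x"] by linarith
  have h12: "(1/2::real) \<in> {0<..<1}" by simp
  have M0: "0 \<le> M" using fb[OF h12] abs_ge_zero[of "f' (1/2)"] by linarith
  have lip1: "\<bar>f y - f x\<bar> \<le> M * (y - x)" if xy: "x \<in> {0<..<1}" "y \<in> {0<..<1}" "x < y" for x y
  proof -
    have dd: "\<And>t. x \<le> t \<Longrightarrow> t \<le> y \<Longrightarrow> DERIV f t :> f' t"
      using der xy by (meson greaterThanLessThan_iff le_less_trans less_le_trans)
    obtain z where z: "x < z" "z < y" "f y - f x = (y - x) * f' z"
      using MVT2[of x y f f', OF xy(3) dd] by blast
    have "z \<in> {0<..<1}" using z xy by auto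
    then have "\<bar>f' z\<bar> \<le> M" by (rule fb)
    then show ?thesis using z xy by (simp add: abs_mult mult.commute mult_right_mono)
  qed
  have lip: "\<bar>f y - f x\<bar> \<le> M * \<bar>y - x\<bar>" if "x \<in> {0<..<1}" "y \<in> {0<..<1}" for x y
  proof (cases x y rule: linorder_cases)
    case less then show ?thesis using lip1[OF that less] by simp
  next
    case equal then show ?thesis by simp
  next
    case greater then show ?thesis using lip1[OF that(2,1) greater] by (simp add: abs_minus_commute)
  qed
  have uc: "uniformly_continuous_on {0<..<1} f"
    unfolding uniformly_continuous_on_def
  proof (intro allI impI)
    fix e :: real assume e: "0 < e"
    show "\<exists>d>0. \<forall>x\<in>{0<..<1}. \<forall>x'\<in>{0<..<1}. dist x' x < d \<longrightarrow> dist (f x') (f x) < e"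
    proof (intro exI[of _ "e / (M + 1)"] conjI ballI impI)
      show "0 < e / (M + 1)" using e M0 by simp
      fix x x' :: real assume x: "x \<in> {0<..<1}" and x': "x' \<in> {0<..<1}" and d: "dist x' x < e / (M + 1)"
      have "\<bar>f x' - f x\<bar> \<le> M * \<bar>x' - x\<bar>" by (rule lip[OF x x'])
      also have "\<dots> \<le> M * (e / (M + 1))" using d M0 by (intro mult_left_mono) (auto simp: dist_real_def)
      also have "\<dots> < e" using e M0 by (simp add: field_simps)
      finally show "dist (f x') (f x) < e" by (simp add: dist_real_def)
    qed
  qed
  obtain g where g: "uniformly_continuous_on (closure {0<..<1}) g" "\<And>x. x \<in> {0<..<1} \<Longrightarrow> f x = g x"
    using uniformly_continuous_on_extension_on_closure[OF uc] by metis
  have "continuous_on {0..1} g" using uniformly_continuous_imp_continuous[OF g(1)] by simp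
  then show ?thesis using that g(2) fxb by metis
qed

lemma ext_bound:
  fixes g :: "real \<Rightarrow> real"
  assumes "continuous_on {0..1} g" "\<And>x. x \<in> {0<..<1} \<Longrightarrow> g x \<in> T" "closed T" "x \<in> {0..1}"
  shows "g x \<in> T"
proof -
  have "g ` closure {0<..<1::real} \<subseteq> T"
    by (rule image_closure_subset) (use assms in auto)
  then show ?thesis using assms(4) by auto
qed

theorem theorem4p3:
  fixes \<beta> :: "real \<Rightarrow> real \<Rightarrow> real"
    and d \<rho> :: "real \<Rightarrow> real"
    and d\<^sub>0 d\<^sub>1 r S :: real
  assumes beta_C1: "C1_on_square \<beta>"
    and beta_pos: "\<forall>x\<in>{0..1}. \<forall>y\<in>{0..1}. \<beta> x y > 0"
    and d_C1: "C1_open_bounded d d\<^sub>1"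
    and d0_pos: "0 < d\<^sub>0"
    and d_lower: "\<forall>x\<in>{0<..<1}. d\<^sub>0 \<le> d x"
    and rho_C1: "C1_open_bounded \<rho> r"
    and rho_nonneg: "\<forall>x\<in>{0<..<1}. 0 \<le> \<rho> x"
    and rho_nonzero: "\<exists>x\<in>{0<..<1}. \<rho> x \<noteq> 0"
    and S_pos: "0 < S"
  shows "\<exists>v v' :: real \<Rightarrow> real.
           (\<forall>x\<in>{0..1}. 0 < v x)
         \<and> (\<forall>x\<in>{0..1}. (v has_real_derivative v' x) (at x within {0..1}))
         \<and> continuous_on {0..1} v'
         \<and> v' 0 = 0 \<and> v' 1 = 0
         \<and> (\<forall>x\<in>{0<..<1}.
              ((\<lambda>t. d t * v' t) has_real_derivative
                 (\<rho> x * v x - S * integral {0..1} (\<lambda>y. \<beta> x y * (v y)\<^sup>2))) (at x))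
         \<and> integral {0..1} (\<lambda>x. \<rho> x * v x)
             - S * integral {0..1} (\<lambda>x. integral {0..1} (\<lambda>y. \<beta> x y * (v y)\<^sup>2)) = 0"
proof -
  let ?b = "\<lambda>(x,y). \<beta> x y"
  obtain D where D: "\<And>z. z \<in> unit_square \<Longrightarrow> (?b has_derivative blinfun_apply (D z)) (at z within unit_square)"
    using beta_C1 unfolding C1_on_square_def by blast
  have bcont: "continuous_on ({0..1} \<times> {0..1}) ?b"
    unfolding continuous_on_eq_continuous_within
    using has_derivative_continuous[OF D] by (simp add: unit_square_def)
  have cpt: "compact ({0..1::real} \<times> {0..1::real})" by (simp add: compact_Times)
  obtain z0 where z0: "z0 \<in> {0..1} \<times> {0..1}" and z0min: "\<And>z. z \<in> {0..1} \<times> {0..1} \<Longrightarrow> ?b z0 \<le> ?b z"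
    using continuous_attains_inf[OF cpt _ bcont] by auto
  obtain z1 where z1: "z1 \<in> {0..1} \<times> {0..1}" and z1max: "\<And>z. z \<in> {0..1} \<times> {0..1} \<Longrightarrow> ?b z \<le> ?b z1"
    using continuous_attains_sup[OF cpt _ bcont] by auto
  define b0 where "b0 = ?b z0"
  define b1 where "b1 = ?b z1"
  have b0pos: "0 < b0" using z0 beta_pos by (auto simp: b0_def split: prod.splits)
  have bbnd: "\<And>x y. x \<in> {0..1} \<Longrightarrow> y \<in> {0..1} \<Longrightarrow> b0 \<le> \<beta> x y \<and> \<beta> x y \<le> b1"
    using z0min z1max by (force simp: b0_def b1_def)
  obtain rt where rt: "continuous_on {0..1} rt" "\<And>x. x \<in> {0<..<1} \<Longrightarrow> rt x = \<rho> x"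
    and rhob: "\<And>x. x \<in> {0<..<1} \<Longrightarrow> \<bar>\<rho> x\<bar> \<le> r"
    using ext_C1[OF rho_C1] by blast
  obtain dt where dt: "continuous_on {0..1} dt" "\<And>x. x \<in> {0<..<1} \<Longrightarrow> dt x = d x"
    using ext_C1[OF d_C1] by blast
  have rbnd: "0 \<le> rt x \<and> rt x \<le> r" if x: "x \<in> {0..1}" for x
  proof -
    have "rt x \<in> {0..r}"
    proof (rule ext_bound[OF rt(1) _ _ x])
      fix y :: real assume "y \<in> {0<..<1}"
      then show "rt y \<in> {0..r}" using rt(2) rhob rho_nonneg by (auto simp: abs_le_iff)
    qed simp
    then show ?thesis by simp
  qed
  have dbnd: "d\<^sub>0 \<le> dt x" if x: "x \<in> {0..1}" for x
  proof -
    have "dt x \<in> {d\<^sub>0..}"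
    proof (rule ext_bound[OF dt(1) _ _ x])
      fix y :: real assume "y \<in> {0<..<1}"
      then show "dt y \<in> {d\<^sub>0..}" using dt(2) d_lower by auto
    qed simp
    then show ?thesis by simp
  qed
  have rnz: "\<exists>x\<in>{0..1}. 0 < rt x"
  proof -
    obtain x where x: "x \<in> {0<..<1}" "\<rho> x \<noteq> 0" using rho_nonzero by blast
    then have "0 < rt x" using rt(2) rho_nonneg by force
    then show ?thesis using x by (intro bexI[of _ x]) auto
  qed
  interpret setting \<beta> rt dt b0 b1 r d\<^sub>0
    by unfold_locales (use bcont b0pos bbnd rt(1) rbnd dt(1) d0_pos dbnd rnz in auto)
  obtain U H \<sigma> where U: "\<forall>x\<in>{0..1}. 0 < U x"
    and Uder: "\<forall>x\<in>{0..1}. (U has_real_derivative H x) (at x within {0..1})"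
    and cH: "continuous_on {0..1} H" and H0: "H 0 = 0" and H1: "H 1 = 0" and sp: "0 < \<sigma>"
    and ode: "\<forall>x\<in>{0<..<1}. ((\<lambda>t. dt t * H t) has_real_derivative
             (rt x * U x - \<sigma> * integral {0..1} (\<lambda>y. \<beta> x y * (U y)\<^sup>2))) (at x)"
    and integ: "integral {0..1} (\<lambda>x. rt x * U x) = \<sigma> * integral {0..1} (\<lambda>x. integral {0..1} (\<lambda>y. \<beta> x y * (U y)\<^sup>2))"
    using core by blast
  define \<kappa> where "\<kappa> = \<sigma> / S"
  have kp: "0 < \<kappa>" using sp S_pos by (simp add: \<kappa>_def)
  have Sk: "S * \<kappa>\<^sup>2 = \<kappa> * \<sigma>" using S_pos by (simp add: \<kappa>_def power2_eq_square field_simps)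
  define v where "v = (\<lambda>x. \<kappa> * U x)"
  define v' where "v' = (\<lambda>x. \<kappa> * H x)"
  have Kv: "integral {0..1} (\<lambda>y. \<beta> x y * (v y)\<^sup>2) = \<kappa>\<^sup>2 * integral {0..1} (\<lambda>y. \<beta> x y * (U y)\<^sup>2)" for x
  proof -
    have "(\<lambda>y. \<beta> x y * (v y)\<^sup>2) = (\<lambda>y. \<kappa>\<^sup>2 * (\<beta> x y * (U y)\<^sup>2))"
      by (auto simp: v_def power_mult_distrib)
    then show ?thesis by simp
  qed
  have P1: "\<forall>x\<in>{0..1}. 0 < v x" using U kp by (simp add: v_def)
  have P2: "\<forall>x\<in>{0..1}. (v has_real_derivative v' x) (at x within {0..1})"
    using Uder unfolding v_def v'_def by (auto intro!: DERIV_cmult)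
  have P3: "continuous_on {0..1} v'" unfolding v'_def by (intro continuous_intros cH)
  have P4: "v' 0 = 0" "v' 1 = 0" using H0 H1 by (simp_all add: v'_def)
  have P5: "((\<lambda>t. d t * v' t) has_real_derivative
                 (\<rho> x * v x - S * integral {0..1} (\<lambda>y. \<beta> x y * (v y)\<^sup>2))) (at x)"
    if x: "x \<in> {0<..<1}" for x
  proof -
    have "((\<lambda>t. \<kappa> * (dt t * H t)) has_real_derivative
             \<kappa> * (rt x * U x - \<sigma> * integral {0..1} (\<lambda>y. \<beta> x y * (U y)\<^sup>2))) (at x)"
      using ode x by (intro DERIV_cmult) auto
    then have "((\<lambda>t. d t * v' t) has_real_derivative
             \<kappa> * (rt x * U x - \<sigma> * integral {0..1} (\<lambda>y. \<beta> x y * (U y)\<^sup>2))) (at x)"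
      by (rule has_field_derivative_transform_within_open[of _ _ _ "{0<..<1}"])
         (use x dt(2) in \<open>auto simp: v'_def\<close>)
    moreover have "\<kappa> * (rt x * U x - \<sigma> * integral {0..1} (\<lambda>y. \<beta> x y * (U y)\<^sup>2))
        = \<rho> x * v x - S * integral {0..1} (\<lambda>y. \<beta> x y * (v y)\<^sup>2)"
      unfolding Kv using rt(2)[OF x] Sk by (simp add: v_def algebra_simps)
    ultimately show ?thesis by simp
  qed
  have P6: "integral {0..1} (\<lambda>x. \<rho> x * v x)
             - S * integral {0..1} (\<lambda>x. integral {0..1} (\<lambda>y. \<beta> x y * (v y)\<^sup>2)) = 0"
  proof -
    have "integral {0..1} (\<lambda>x. \<rho> x * v x) = integral {0..1} (\<lambda>x. \<kappa> * (rt x * U x))"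
    proof (rule integral_spike[of "{0,1}"])
      show "negligible {0::real, 1}" by simp
      fix x assume "x \<in> {0..1} - {0::real, 1}"
      then have "x \<in> {0<..<1}" by auto
      then show "\<kappa> * (rt x * U x) = \<rho> x * v x" using rt(2) by (simp add: v_def)
    qed
    also have "\<dots> = \<kappa> * \<sigma> * integral {0..1} (\<lambda>x. integral {0..1} (\<lambda>y. \<beta> x y * (U y)\<^sup>2))"
      using integ by simp
    finally have a: "integral {0..1} (\<lambda>x. \<rho> x * v x) = \<kappa> * \<sigma> * integral {0..1} (\<lambda>x. integral {0..1} (\<lambda>y. \<beta> x y * (U y)\<^sup>2))" .
    have b: "S * integral {0..1} (\<lambda>x. integral {0..1} (\<lambda>y. \<beta> x y * (v y)\<^sup>2))
        = \<kappa> * \<sigma> * integral {0..1} (\<lambda>x. integral {0..1} (\<lambda>y. \<beta> x y * (U y)\<^sup>2))"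
      unfolding Kv using Sk by simp
    show ?thesis using a b by simp
  qed
  show ?thesis using P1 P2 P3 P4 P5 P6 by blast
qed


end
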